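(* Suppose Assumptions (A1), (A2), (A4) hold, $F^*>-\infty$, and MoSSP-R is run with constant parameters $\rho_k\equiv\rho$, $\mu_k\equiv\mu$, $\alpha_k\equiv\alpha$, $0<\beta\le1$ satisfying $\mu L_\rho\le\frac14$ and $0<32\mu^2L_f^2\le\alpha\le1$. Let $R$ be uniform on $\{0,\dots,K-1\}$ independent of the samples, and set $A:=\frac1{16}+\beta^{-2}+\frac13(\mu/\beta)^2$, $B:=\frac1{16}+\beta^{-2}$. Then $$\max\{\mathbb{E}\|\bm u^{R+1}\|^2,\ \mathbb{E}\|\bm x^{R+1}-\mathrm{prox}_{\mu g}(\bm z^R)\|^2\}\le\frac1K\Big(\frac{(96+768A)\mu L_f^2}{\alpha}+\frac{24A}{\mu}\Big)\big(\mathcal{L}_{\rho,\mu}(\bm w^0)-\mathcal{L}^*\big)+\frac{(48A+6)\mathbb{E}\|\bm e^0\|^2}{\alpha K}+(96A+12)\alpha\sigma^2,$$ and $$\mathbb{E}\|\nabla\bm c(\bm x^{R+1})\bm c(\bm x^{R+1})\|^2\le\frac{2}{\rho^2K}\Big(\frac{(144+768\beta^{-2})\mu L_f^2}{\alpha}+\frac{24B}{\mu}\Big)\big(\mathcal{L}_{\rho,\mu}(\bm w^0)-\mathcal{L}^*\big)+\frac{(12+96B)\mathbb{E}\|\bm e^0\|^2}{\alpha\rho^2K}+\frac{(24+192B)\alpha\sigma^2}{\rho^2}+\frac{18G^2}{\rho^2}.$$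
   Context: Problem data: $f(\bm x)=\mathbb{E}_\xi[\mathbf f(\bm x,\xi)]$ ($\xi\sim\Xi$), $f$ and $\bm c:\mathbb{R}^n\to\mathbb{R}^m$ continuously differentiable, $h:\mathbb{R}^n\to\mathbb{R}\cup\{+\infty\}$, $g:\mathbb{R}^n\to\mathbb{R}$ proper closed convex; $F^*:=\inf_{\bm x}\{f+h-g\}(\bm x)$; $\nabla\bm c(\bm x):=J_{\bm c}(\bm x)^\top$; $Q_\rho(\bm x):=f(\bm x)+\frac\rho2\|\bm c(\bm x)\|^2$; $\mathrm{prox}_{\mu\varphi}$ and Moreau envelope $\mathcal{M}_{\mu\varphi}(\bm z)=\min_{\bm x}\{\varphi(\bm x)+\frac1{2\mu}\|\bm x-\bm z\|^2\}$. Potential $\mathcal{L}_{\rho,\mu}(\bm x,\bm z):=Q_\rho(\bm x)+h(\bm x)+\frac1{2\mu}\|\bm x-\bm z\|^2-\mathcal{M}_{\mu g}(\bm z)$; $\mathcal{L}^*:=F^*-\frac{G^2\bar\mu}2$ with $\bar\mu\ge\mu$ a constant. $L_\rho:=\rho\tilde L$, $\tilde L=\rho_0^{-1}L_f+G^2+CL_c$ with $\rho_0\le\rho$. (A1): $f$ is $L_f$-smooth, $\nabla\bm c$ is $L_c$-Lipschitz, and there are $C,G>0$ with $\|\nabla f(\bm x)\|\le G$, all subgradients of $h$ and of $g$ have norm $\le G$, $\|\nabla\bm c(\bm x)\|\le G$, $\|\bm c(\bm x)\|\le C$ for all $\bm x$. (A2): $\mathbb{E}_\xi[\nabla\mathbf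 f(\bm x,\xi)]=\nabla f(\bm x)$, $\mathbb{E}_\xi\|\nabla\mathbf f(\bm x,\xi)-\nabla f(\bm x)\|^2\le\sigma^2$. (A4): for a.e. $\xi$, $\mathbf f(\cdot,\xi)$ differentiable and $\mathbb{E}_\xi\|\nabla\mathbf f(\bm x,\xi)-\nabla\mathbf f(\bm y,\xi)\|^2\le L_f^2\|\bm x-\bm y\|^2$. MoSSP-R: $\bm x^0=\bm z^0$; $\bm d^0=\frac1{b_0}\sum_{j=1}^{b_0}\nabla\mathbf f(\bm x^0,\xi^0_j)$; for $k\ge1$ fresh i.i.d. $\xi^k$, $\bm d^k=\nabla\mathbf f(\bm x^k,\xi^k)+(1-\alpha)(\bm d^{k-1}-\nabla\mathbf f(\bm x^{k-1},\xi^k))$; $\bm D^k=\bm d^k+\rho\nabla\bm c(\bm x^k)\bm c(\bm x^k)$; $\bm x^{k+1}=\mathrm{prox}_{\mu h}(\bm z^k-\mu\bm D^k)$, $\bm z^{k+1}=\bm z^k-\beta(\mathrm{prox}_{\mu g}(\bm z^k)-\bm x^{k+1})$; $\bm w^k=(\bm x^k,\bm z^k)$; $\bm e^k:=\bm D^k-\nabla Q_\rho(\bm x^k)$; $\bm u^{k+1}:=\nabla Q_\rho(\bm x^{k+1})-\bm D^k+\mu^{-1}(\mathrm{prox}_{\mu g}(\bm z^k)-\bm x^{k+1})$. *)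

theory Defs
  imports "HOL-Analysis.Analysis" "HOL-Probability.Probability"
begin

definition proper_closed_convex :: "('a::euclidean_space \<Rightarrow> ereal) \<Rightarrow> bool" where
  "proper_closed_convex \<phi> \<longleftrightarrow>
     (\<forall>x. \<phi> x \<noteq> -\<infinity>) \<and> (\<exists>x. \<phi> x \<noteq> \<infinity>) \<and>
     closed {(x, t::real). \<phi> x \<le> ereal t} \<and>
     convex {(x, t::real). \<phi> x \<le> ereal t}"

definition is_subgradient :: "('a::euclidean_space \<Rightarrow> ereal) \<Rightarrow> 'a \<Rightarrow> 'a \<Rightarrow> bool" where
  "is_subgradient \<phi> x v \<longleftrightarrow> \<bar>\<phi> x\<bar> \<noteq> \<infinity> \<and> (\<forall>y. \<phi> y \<ge> \<phi> x + ereal (v \<bullet> (y - x)))"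

definition prox :: "real \<Rightarrow> ('a::euclidean_space \<Rightarrow> ereal) \<Rightarrow> 'a \<Rightarrow> 'a" where
  "prox \<mu> \<phi> z = (SOME x. \<forall>y. \<phi> x + ereal ((norm (x - z))\<^sup>2 / (2 * \<mu>))
                               \<le> \<phi> y + ereal ((norm (y - z))\<^sup>2 / (2 * \<mu>)))"

definition moreau :: "real \<Rightarrow> ('a::euclidean_space \<Rightarrow> real) \<Rightarrow> 'a \<Rightarrow> real" where
  "moreau \<mu> g z = (INF x. g x + (norm (x - z))\<^sup>2 / (2 * \<mu>))"

text \<open>nabla c(x) c(x) = J_c(x)^T c(x), with c' x the derivative (Jacobian) of c at x.\<close>
definition grad_pen :: "('a::euclidean_space \<Rightarrow> 'b::euclidean_space) \<Rightarrow> ('a \<Rightarrow> 'a \<Rightarrow> 'b) \<Rightarrow> 'a \<Rightarrow> 'a" where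
  "grad_pen c c' x = adjoint (c' x) (c x)"

text \<open>MoSSP-R iterates (x^k, z^k, d^k) driven by a sample sequence omega:
  omega 0 .. omega (b0-1) form the initial mini-batch xi^0_j, and omega (b0 + k) is xi^(k+1).\<close>
primrec mossp :: "('a::euclidean_space \<Rightarrow> 'c \<Rightarrow> 'a) \<Rightarrow> ('a \<Rightarrow> 'b::euclidean_space) \<Rightarrow> ('a \<Rightarrow> 'a \<Rightarrow> 'b)
   \<Rightarrow> ('a \<Rightarrow> ereal) \<Rightarrow> ('a \<Rightarrow> real) \<Rightarrow> real \<Rightarrow> real \<Rightarrow> real \<Rightarrow> real \<Rightarrow> nat \<Rightarrow> 'a
   \<Rightarrow> (nat \<Rightarrow> 'c) \<Rightarrow> nat \<Rightarrow> 'a \<times> 'a \<times> 'a" where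
  "mossp gf c c' h g \<rho> \<mu> \<alpha> \<beta> b0 x0 \<omega> 0 =
     (x0, x0, (1 / real b0) *\<^sub>R (\<Sum>j<b0. gf x0 (\<omega> j)))"
| "mossp gf c c' h g \<rho> \<mu> \<alpha> \<beta> b0 x0 \<omega> (Suc k) =
     (let (x, z, d) = mossp gf c c' h g \<rho> \<mu> \<alpha> \<beta> b0 x0 \<omega> k;
          D = d + \<rho> *\<^sub>R grad_pen c c' x;
          x' = prox \<mu> h (z - \<mu> *\<^sub>R D);
          z' = z - \<beta> *\<^sub>R (prox \<mu> (\<lambda>y. ereal (g y)) z - x');
          \<xi> = \<omega> (b0 + k);
          d' = gf x' \<xi> + (1 - \<alpha>) *\<^sub>R (d - gf x \<xi>)
      in (x', z', d'))"

definition potential :: "('a::euclidean_space \<Rightarrow> real) \<Rightarrow> ('a \<Rightarrow> 'b::euclidean_space) \<Rightarrow> ('a \<Rightarrow> ereal)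
   \<Rightarrow> ('a \<Rightarrow> real) \<Rightarrow> real \<Rightarrow> real \<Rightarrow> 'a \<Rightarrow> 'a \<Rightarrow> ereal" where
  "potential f c h g \<rho> \<mu> x z =
     ereal (f x + \<rho> / 2 * (norm (c x))\<^sup>2) + h x + ereal ((norm (x - z))\<^sup>2 / (2 * \<mu>))
     - ereal (moreau \<mu> g z)"

end

theory Submission
  imports Defs
begin

lemma norm_add_sq: "(norm (p + t *\<^sub>R d))\<^sup>2 = (norm p)\<^sup>2 + 2 * t * (p \<bullet> d) + t\<^sup>2 * (norm d)\<^sup>2"
  for p d :: "'a::real_inner"
  unfolding power2_norm_eq_inner
  by (simp add: inner_add_left inner_add_right inner_commute algebra_simps power2_eq_square)

lemma pcc_props:
  assumes "proper_closed_convex \<phi>"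
  shows "\<And>x. \<phi> x \<noteq> -\<infinity>" "\<exists>x. \<phi> x \<noteq> \<infinity>"
    "closed {(x, t::real). \<phi> x \<le> ereal t}" "convex {(x, t::real). \<phi> x \<le> ereal t}"
  using assms unfolding proper_closed_convex_def by auto

lemma affine_minorant:
  fixes \<phi> :: "'a::euclidean_space \<Rightarrow> ereal"
  assumes "proper_closed_convex \<phi>"
  shows "\<exists>v c. \<forall>x. ereal (c + v \<bullet> x) \<le> \<phi> x"
proof -
  note P = pcc_props[OF assms]
  obtain x1 where x1: "\<phi> x1 \<noteq> \<infinity>" using P(2) by blast
  then obtain r1 where r1: "\<phi> x1 = ereal r1" using P(1)[of x1] by (cases "\<phi> x1") auto
  define S where "S = {(x, t::real). \<phi> x \<le> ereal t}"
  have "(x1, r1 - 1) \<notin> S" using r1 by (simp add: S_def)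
  from separating_hyperplane_closed_point[OF P(4)[folded S_def] P(3)[folded S_def] this]
  obtain a b where ab: "inner a (x1, r1 - 1) < b" "\<forall>p\<in>S. inner a p > b" by blast
  obtain a1 a2 where a: "a = (a1, a2)" by (cases a)
  have "(x1, r1) \<in> S" using r1 by (simp add: S_def)
  with ab have "a1 \<bullet> x1 + a2 * r1 > b" "a1 \<bullet> x1 + a2 * (r1 - 1) < b"
    by (auto simp: a inner_Pair)
  hence a2: "a2 > 0" by (simp add: algebra_simps)
  have "ereal ((b / a2) + (- (1/a2) *\<^sub>R a1) \<bullet> x) \<le> \<phi> x" for x
  proof (cases "\<phi> x")
    case (real t)
    hence "(x, t) \<in> S" by (simp add: S_def)
    with ab have "a1 \<bullet> x + a2 * t > b" by (auto simp: a inner_Pair)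
    hence "b / a2 + (- (1/a2) *\<^sub>R a1) \<bullet> x \<le> t" using a2
      by (simp add: field_simps)
    thus ?thesis using real by simp
  next
    case PInf thus ?thesis by simp
  next
    case MInf thus ?thesis using P(1) by simp
  qed
  thus ?thesis by blast
qed

lemma ereal_add_le_iff: "(\<phi> + ereal a \<le> ereal t) \<longleftrightarrow> (\<phi> \<le> ereal (t - a))"
  by (cases \<phi>) auto

lemma prox_exists:
  fixes \<phi> :: "'a::euclidean_space \<Rightarrow> ereal"
  assumes pcc: "proper_closed_convex \<phi>" and mu: "\<mu> > 0"
  shows "\<exists>x. \<forall>y. \<phi> x + ereal ((norm (x - w))\<^sup>2 / (2 * \<mu>)) \<le> \<phi> y + ereal ((norm (y - w))\<^sup>2 / (2 * \<mu>))"
proof -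
  note P = pcc_props[OF pcc]
  define q where "q x = (norm (x - w))\<^sup>2 / (2 * \<mu>)" for x
  define \<Psi> where "\<Psi> x = \<phi> x + ereal (q x)" for x
  obtain v c where vc: "\<And>x. ereal (c + v \<bullet> x) \<le> \<phi> x" using affine_minorant[OF pcc] by blast
  obtain x1 where x1: "\<phi> x1 \<noteq> \<infinity>" using P(2) by blast
  then obtain r1 where r1: "\<phi> x1 = ereal r1" using P(1)[of x1] by (cases "\<phi> x1") auto
  define K1 where "K1 = r1 + q x1"
  have PsiK1: "\<Psi> x1 = ereal K1" by (simp add: \<Psi>_def r1 K1_def)
  have Psi_lb: "ereal (c + v \<bullet> x + q x) \<le> \<Psi> x" for x
    using vc[of x] unfolding \<Psi>_def by (cases "\<phi> x") auto
  define K2 where "K2 = \<bar>K1 - c - v \<bullet> w\<bar>"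
  define R where "R = 2 * \<mu> * norm v + 2 * \<mu> * K2 + 1"
  have coer: "norm (y - w) \<le> R" if "\<Psi> y \<le> ereal K1" for y
  proof (rule ccontr)
    assume "\<not> norm (y - w) \<le> R"
    hence rR: "norm (y - w) > R" by simp
    define r where "r = norm (y - w)"
    have "c + v \<bullet> y + q y \<le> K1" using Psi_lb[of y] that by (meson ereal_less_eq(3) order_trans)
    moreover have "v \<bullet> y = v \<bullet> w + v \<bullet> (y - w)" by (simp add: inner_diff_right)
    moreover have "v \<bullet> (y - w) \<ge> - (norm v * r)"
      using Cauchy_Schwarz_ineq2[of v "y - w"] unfolding r_def by linarith
    ultimately have "r\<^sup>2 / (2 * \<mu>) \<le> K2 + norm v * r"
      unfolding q_def K2_def r_def by linarith
    hence "r\<^sup>2 \<le> 2 * \<mu> * K2 + 2 * \<mu> * norm v * r" using mu by (simp add: field_simps)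
    moreover have "r > R" using rR r_def by simp
    moreover have "R \<ge> 1" "K2 \<ge> 0" "norm v \<ge> 0" unfolding R_def K2_def using mu by auto
    ultimately have h: "r\<^sup>2 \<le> 2 * \<mu> * K2 + 2 * \<mu> * norm v * r" "r > R" "R \<ge> 1" "K2 \<ge> 0" by auto
    have "r * r > r * R" using h by (intro mult_strict_left_mono) auto
    moreover have "r * (2 * \<mu> * K2 + 1) \<ge> 1 * (2 * \<mu> * K2 + 1)"
      using h mu by (intro mult_right_mono) auto
    moreover have "r * R = 2 * \<mu> * norm v * r + r * (2 * \<mu> * K2 + 1)" unfolding R_def by (simp add: algebra_simps)
    ultimately show False using h(1) by (simp add: power2_eq_square)
  qed
  define B0 where "B0 = \<bar>c\<bar> + norm v * (norm w + R)"
  define E where "E = {(x, t::real). \<Psi> x \<le> ereal t}"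
  have E_eq: "E = (\<lambda>p. (fst p, snd p - q (fst p))) -` {(x, t::real). \<phi> x \<le> ereal t}"
    unfolding E_def \<Psi>_def by (auto simp: ereal_add_le_iff)
  have qc: "continuous_on UNIV q" using mu unfolding q_def by (intro continuous_intros) auto
  have "closed E" unfolding E_eq
    apply (rule closed_vimage[OF P(3)])
    by (intro continuous_intros continuous_on_compose2[OF qc]) auto
  define T where "T = E \<inter> (cball w R \<times> {-B0..K1})"
  have "compact T" unfolding T_def
    by (intro closed_Int_compact \<open>closed E\<close> compact_Times compact_cball compact_Icc)
  have x1T: "(x1, K1) \<in> T"
  proof -
    have "norm (x1 - w) \<le> R" using coer[of x1] PsiK1 by simp
    moreover have "-B0 \<le> K1"
    proof -
      have "c + v \<bullet> x1 + q x1 \<le> K1" using Psi_lb[of x1] PsiK1 by simp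
      moreover have "v \<bullet> x1 \<ge> - (norm v * norm x1)"
        using Cauchy_Schwarz_ineq2[of v x1] by linarith
      moreover have "norm x1 \<le> norm w + R" using \<open>norm (x1 - w) \<le> R\<close> norm_triangle_sub[of x1 w]
        by (simp add: norm_minus_commute)
      moreover have "q x1 \<ge> 0" using mu by (simp add: q_def)
      moreover have "norm v * norm x1 \<le> norm v * (norm w + R)"
        using \<open>norm x1 \<le> norm w + R\<close> by (simp add: mult_left_mono)
      ultimately show ?thesis unfolding B0_def by linarith
    qed
    ultimately show ?thesis unfolding T_def E_def using PsiK1 by (auto simp: dist_norm norm_minus_commute)
  qed
  hence "T \<noteq> {}" by auto
  have "continuous_on T snd" by (intro continuous_intros)
  from continuous_attains_inf[OF \<open>compact T\<close> \<open>T \<noteq> {}\<close> this]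
  obtain p where pT: "p \<in> T" and pmin: "\<forall>y\<in>T. snd p \<le> snd y"
    by blast
  obtain xs ts where p: "p = (xs, ts)" by (cases p)
  have xs: "\<Psi> xs \<le> ereal ts" "ts \<le> K1" using pT unfolding p T_def E_def by auto
  have "\<Psi> xs \<le> \<Psi> y" for y
  proof (cases "\<Psi> y \<le> ereal K1")
    case True
    have "\<Psi> y \<noteq> -\<infinity>" unfolding \<Psi>_def using P(1)[of y] by simp
    then obtain s where s: "\<Psi> y = ereal s" using True by (cases "\<Psi> y") auto
    have ny: "norm (y - w) \<le> R" using coer True by simp
    have "-B0 \<le> s"
    proof -
      have "c + v \<bullet> y + q y \<le> s" using Psi_lb[of y] s by simp
      moreover have "v \<bullet> y \<ge> - (norm v * norm y)"
        using Cauchy_Schwarz_ineq2[of v y] by linarith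
      moreover have "norm y \<le> norm w + R" using ny norm_triangle_sub[of y w]
        by (simp add: norm_minus_commute)
      moreover have "q y \<ge> 0" using mu by (simp add: q_def)
      moreover have "norm v * norm y \<le> norm v * (norm w + R)"
        using \<open>norm y \<le> norm w + R\<close> by (simp add: mult_left_mono)
      ultimately show ?thesis unfolding B0_def by linarith
    qed
    hence "(y, s) \<in> T" unfolding T_def E_def using s True ny by (auto simp: dist_norm norm_minus_commute)
    hence "ts \<le> s" using pmin p by auto
    hence "ereal ts \<le> \<Psi> y" using s by simp
    thus ?thesis using xs(1) by (rule order_trans[rotated])
  next
    case False
    hence "ereal K1 \<le> \<Psi> y" by simp
    moreover have "ereal ts \<le> ereal K1" using xs(2) by simp
    ultimately have "ereal ts \<le> \<Psi> y" by (rule order_trans[rotated])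
    thus ?thesis using xs(1) by (rule order_trans[rotated])
  qed
  thus ?thesis unfolding \<Psi>_def q_def by blast
qed


lemma prox_min:
  fixes \<phi> :: "'a::euclidean_space \<Rightarrow> ereal"
  assumes pcc: "proper_closed_convex \<phi>" and mu: "\<mu> > 0"
  shows "\<phi> (prox \<mu> \<phi> w) + ereal ((norm (prox \<mu> \<phi> w - w))\<^sup>2 / (2 * \<mu>)) \<le> \<phi> y + ereal ((norm (y - w))\<^sup>2 / (2 * \<mu>))"
  using someI_ex[OF prox_exists[OF pcc mu, of w]] unfolding prox_def by blast

lemma prox_finite:
  fixes \<phi> :: "'a::euclidean_space \<Rightarrow> ereal"
  assumes pcc: "proper_closed_convex \<phi>" and mu: "\<mu> > 0"
  shows "\<bar>\<phi> (prox \<mu> \<phi> w)\<bar> \<noteq> \<infinity>"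
proof -
  note P = pcc_props[OF pcc]
  obtain x1 where x1: "\<phi> x1 \<noteq> \<infinity>" using P(2) by blast
  have "\<phi> (prox \<mu> \<phi> w) + ereal ((norm (prox \<mu> \<phi> w - w))\<^sup>2 / (2 * \<mu>)) \<le> \<phi> x1 + ereal ((norm (x1 - w))\<^sup>2 / (2 * \<mu>))"
    by (rule prox_min[OF pcc mu])
  hence "\<phi> (prox \<mu> \<phi> w) \<noteq> \<infinity>" using x1 by auto
  thus ?thesis using P(1) by auto
qed

lemma pcc_convex_ineq:
  fixes \<phi> :: "'a::euclidean_space \<Rightarrow> ereal"
  assumes pcc: "proper_closed_convex \<phi>" and "\<phi> x = ereal a" "\<phi> y = ereal b" "0 \<le> t" "t \<le> 1"
  shows "\<phi> ((1 - t) *\<^sub>R x + t *\<^sub>R y) \<le> ereal ((1 - t) * a + t * b)"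
proof -
  note P = pcc_props[OF pcc]
  have "(x, a) \<in> {(x, t::real). \<phi> x \<le> ereal t}" "(y, b) \<in> {(x, t::real). \<phi> x \<le> ereal t}"
    using assms by auto
  from convexD[OF P(4) this, of "1 - t" t] assms(4,5)
  show ?thesis by simp
qed

lemma le_of_small_slack:
  fixes a b C :: real
  assumes "\<And>t. 0 < t \<Longrightarrow> t \<le> 1 \<Longrightarrow> a \<le> b + t * C" "C \<ge> 0"
  shows "a \<le> b"
proof (rule ccontr)
  assume "\<not> a \<le> b"
  hence gap: "a - b > 0" by simp
  define t where "t = min 1 ((a - b) / (2 * C + 1))"
  have t: "0 < t" "t \<le> 1" using gap assms(2) by (auto simp: t_def)
  have "t * C \<le> ((a - b) / (2 * C + 1)) * C" using assms(2) by (intro mult_right_mono) (auto simp: t_def)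
  also have "\<dots> < a - b"
  proof -
    have "(a - b) * C < (a - b) * (2 * C + 1)" using gap assms(2) by (intro mult_strict_left_mono) auto
    thus ?thesis using assms(2) by (simp add: field_simps)
  qed
  finally show False using assms(1)[OF t] by linarith
qed

lemma prox_subgrad:
  fixes \<phi> :: "'a::euclidean_space \<Rightarrow> ereal"
  assumes pcc: "proper_closed_convex \<phi>" and mu: "\<mu> > 0"
  shows "is_subgradient \<phi> (prox \<mu> \<phi> w) ((1 / \<mu>) *\<^sub>R (w - prox \<mu> \<phi> w))"
proof -
  define x where "x = prox \<mu> \<phi> w"
  define v where "v = (1 / \<mu>) *\<^sub>R (w - x)"
  have fin: "\<bar>\<phi> x\<bar> \<noteq> \<infinity>" unfolding x_def by (rule prox_finite[OF pcc mu])
  then obtain a where a: "\<phi> x = ereal a" by (cases "\<phi> x") auto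
  have "\<phi> y \<ge> \<phi> x + ereal (v \<bullet> (y - x))" for y
  proof (cases "\<phi> y")
    case PInf thus ?thesis by (simp add: a)
  next
    case MInf thus ?thesis using pcc_props(1)[OF pcc] by simp
  next
    case (real b)
    have "a + v \<bullet> (y - x) \<le> b + t * ((norm (y - x))\<^sup>2 / (2 * \<mu>))" if t: "0 < t" "t \<le> 1" for t
    proof -
      define xt where "xt = (1 - t) *\<^sub>R x + t *\<^sub>R y"
      have xt2: "xt - w = (x - w) + t *\<^sub>R (y - x)" by (simp add: xt_def algebra_simps)
      have c1: "\<phi> xt \<le> ereal ((1 - t) * a + t * b)"
        unfolding xt_def using pcc_convex_ineq[OF pcc a real] t by simp
      have "\<phi> x + ereal ((norm (x - w))\<^sup>2 / (2 * \<mu>)) \<le> \<phi> xt + ereal ((norm (xt - w))\<^sup>2 / (2 * \<mu>))"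
        unfolding x_def by (rule prox_min[OF pcc mu])
      also have "\<dots> \<le> ereal ((1 - t) * a + t * b) + ereal ((norm (xt - w))\<^sup>2 / (2 * \<mu>))"
        using c1 by (rule add_right_mono)
      finally have "a + (norm (x - w))\<^sup>2 / (2 * \<mu>) \<le> (1 - t) * a + t * b + (norm (xt - w))\<^sup>2 / (2 * \<mu>)"
        by (simp add: a)
      moreover have "(norm (xt - w))\<^sup>2 = (norm (x - w))\<^sup>2 + 2 * t * ((x - w) \<bullet> (y - x)) + t\<^sup>2 * (norm (y - x))\<^sup>2"
        unfolding xt2 by (rule norm_add_sq)
      ultimately have "t * a \<le> t * b + t * ((x - w) \<bullet> (y - x)) / \<mu> + t\<^sup>2 * (norm (y - x))\<^sup>2 / (2 * \<mu>)"
        using mu by (simp add: field_simps)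
      hence "t * a \<le> t * (b + ((x - w) \<bullet> (y - x)) / \<mu> + t * ((norm (y - x))\<^sup>2 / (2 * \<mu>)))"
        by (simp add: algebra_simps power2_eq_square)
      hence "a \<le> b + ((x - w) \<bullet> (y - x)) / \<mu> + t * ((norm (y - x))\<^sup>2 / (2 * \<mu>))"
        using t by simp
      moreover have "v \<bullet> (y - x) = - (((x - w) \<bullet> (y - x)) / \<mu>)"
      proof -
        have "v \<bullet> (y - x) = (1 / \<mu>) * ((w - x) \<bullet> (y - x))" by (simp add: v_def)
        moreover have "w - x = - (x - w)" by simp
        ultimately show ?thesis by (simp only: inner_minus_left) simp
      qed
      ultimately show ?thesis by linarith
    qed
    hence "a + v \<bullet> (y - x) \<le> b" by (rule le_of_small_slack) (use mu in auto)
    thus ?thesis using a real by simp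
  qed
  thus ?thesis unfolding is_subgradient_def v_def x_def using fin x_def by auto
qed


lemma subgrad_finite_ineq:
  assumes "is_subgradient \<phi> x v" "\<phi> x = ereal a" "\<phi> y = ereal b"
  shows "b \<ge> a + v \<bullet> (y - x)"
  using assms unfolding is_subgradient_def by (metis ereal_less_eq(3) plus_ereal.simps(1))

lemma prox_nonexp:
  fixes \<phi> :: "'a::euclidean_space \<Rightarrow> ereal"
  assumes pcc: "proper_closed_convex \<phi>" and mu: "\<mu> > 0"
  shows "norm (prox \<mu> \<phi> a - prox \<mu> \<phi> b) \<le> norm (a - b)"
proof -
  define x y where "x = prox \<mu> \<phi> a" and "y = prox \<mu> \<phi> b"
  obtain p where p: "\<phi> x = ereal p" using prox_finite[OF pcc mu, of a] unfolding x_def by (cases "\<phi> x") auto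
  obtain r where r: "\<phi> y = ereal r" using prox_finite[OF pcc mu, of b] unfolding y_def by (cases "\<phi> y") auto
  have s1: "r \<ge> p + ((1 / \<mu>) *\<^sub>R (a - x)) \<bullet> (y - x)"
    using subgrad_finite_ineq[OF prox_subgrad[OF pcc mu, of a, folded x_def] p r] .
  have s2: "p \<ge> r + ((1 / \<mu>) *\<^sub>R (b - y)) \<bullet> (x - y)"
    using subgrad_finite_ineq[OF prox_subgrad[OF pcc mu, of b, folded y_def] r p] .
  have "((a - x) \<bullet> (y - x)) / \<mu> + ((b - y) \<bullet> (x - y)) / \<mu> \<le> 0" using s1 s2 by simp
  hence "(a - x) \<bullet> (y - x) + (b - y) \<bullet> (x - y) \<le> 0" using mu by (simp add: add_divide_distrib[symmetric] divide_le_0_iff)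
  moreover have "(a - x) \<bullet> (y - x) + (b - y) \<bullet> (x - y) = (norm (x - y))\<^sup>2 - (a - b) \<bullet> (x - y)"
    by (simp add: power2_norm_eq_inner inner_diff_left inner_diff_right inner_commute algebra_simps)
  ultimately have "(norm (x - y))\<^sup>2 \<le> (a - b) \<bullet> (x - y)" by simp
  also have "\<dots> \<le> norm (a - b) * norm (x - y)" by (rule norm_cauchy_schwarz)
  finally have "norm (x - y) * norm (x - y) \<le> norm (a - b) * norm (x - y)" by (simp add: power2_eq_square)
  hence "norm (x - y) \<le> norm (a - b)"
    by (cases "norm (x - y) = 0") (auto simp: mult_le_cancel_right)
  thus ?thesis unfolding x_def y_def .
qed

lemma prox_cont:
  fixes \<phi> :: "'a::euclidean_space \<Rightarrow> ereal"
  assumes pcc: "proper_closed_convex \<phi>" and mu: "\<mu> > 0"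
  shows "continuous_on UNIV (prox \<mu> \<phi>)"
  by (rule lipschitz_on_continuous_on[of 1]) (auto simp: lipschitz_on_def dist_norm prox_nonexp[OF pcc mu])

lemma moreau_props:
  fixes g :: "'a::euclidean_space \<Rightarrow> real"
  assumes pcc: "proper_closed_convex (\<lambda>y. ereal (g y))" and mu: "\<mu> > 0"
  shows "moreau \<mu> g z = g (prox \<mu> (\<lambda>y. ereal (g y)) z) + (norm (prox \<mu> (\<lambda>y. ereal (g y)) z - z))\<^sup>2 / (2 * \<mu>)"
    and "moreau \<mu> g z \<le> g y + (norm (y - z))\<^sup>2 / (2 * \<mu>)"
proof -
  define p where "p = prox \<mu> (\<lambda>y. ereal (g y)) z"
  define F where "F x = g x + (norm (x - z))\<^sup>2 / (2 * \<mu>)" for x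
  have pm: "F p \<le> F y" for y
    using prox_min[OF pcc mu, of z y] unfolding p_def F_def by simp
  have bdd: "bdd_below (range F)" using pm by (intro bdd_belowI[of _ "F p"]) auto
  have "moreau \<mu> g z = (INF x. F x)" unfolding moreau_def F_def ..
  also have "\<dots> = F p"
    by (rule antisym) (auto intro: cINF_lower[OF bdd] cINF_greatest pm)
  finally show "moreau \<mu> g z = g p + (norm (p - z))\<^sup>2 / (2 * \<mu>)" unfolding F_def .
  thus "moreau \<mu> g z \<le> g y + (norm (y - z))\<^sup>2 / (2 * \<mu>)" using pm[of y] unfolding F_def by simp
qed

lemma descent_lemma:
  fixes F :: "'a::real_inner \<Rightarrow> real"
  assumes der: "\<And>y. (F has_derivative (\<lambda>v. gF y \<bullet> v)) (at y)"
    and lip: "\<And>y y'. norm (gF y - gF y') \<le> L * norm (y - y')" and L: "L \<ge> 0"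
  shows "F y \<le> F x + gF x \<bullet> (y - x) + L / 2 * (norm (y - x))\<^sup>2"
proof -
  define d where "d = y - x"
  define \<psi> where "\<psi> t = F (x + t *\<^sub>R d) - t * (gF x \<bullet> d) - L / 2 * t\<^sup>2 * (norm d)\<^sup>2" for t :: real
  have D1: "((\<lambda>t. F (x + t *\<^sub>R d)) has_field_derivative (gF (x + t *\<^sub>R d) \<bullet> d)) (at t)" for t
  proof -
    have "((\<lambda>t. x + t *\<^sub>R d) has_derivative (\<lambda>s. s *\<^sub>R d)) (at t)"
      by (auto intro!: derivative_eq_intros)
    from has_derivative_compose[OF this der]
    have "((\<lambda>t. F (x + t *\<^sub>R d)) has_derivative (\<lambda>s. gF (x + t *\<^sub>R d) \<bullet> (s *\<^sub>R d))) (at t)" .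
    moreover have "(\<lambda>s. gF (x + t *\<^sub>R d) \<bullet> (s *\<^sub>R d)) = (*) (gF (x + t *\<^sub>R d) \<bullet> d)"
      by (auto simp: fun_eq_iff)
    ultimately show ?thesis by (simp add: has_field_derivative_def)
  qed
  have D: "(\<psi> has_field_derivative (gF (x + t *\<^sub>R d) \<bullet> d - gF x \<bullet> d - L * t * (norm d)\<^sup>2)) (at t)" for t
    unfolding \<psi>_def
    by (rule derivative_eq_intros D1 refl | simp)+
  have "\<psi> 1 \<le> \<psi> 0"
  proof (rule DERIV_nonpos_imp_nonincreasing[of 0 1 \<psi>])
    fix t :: real assume t: "0 \<le> t" "t \<le> 1"
    have "gF (x + t *\<^sub>R d) \<bullet> d - gF x \<bullet> d = (gF (x + t *\<^sub>R d) - gF x) \<bullet> d" by (simp add: inner_diff_left)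
    also have "\<dots> \<le> norm (gF (x + t *\<^sub>R d) - gF x) * norm d" by (rule norm_cauchy_schwarz)
    also have "\<dots> \<le> (L * norm (t *\<^sub>R d)) * norm d" using lip[of "x + t *\<^sub>R d" x] by (intro mult_right_mono) auto
    also have "\<dots> = L * t * (norm d)\<^sup>2" using t by (simp add: power2_eq_square)
    finally show "\<exists>y. (\<psi> has_real_derivative y) (at t) \<and> y \<le> 0" using D[of t] by (intro exI[of _ "gF (x + t *\<^sub>R d) \<bullet> d - gF x \<bullet> d - L * t * (norm d)\<^sup>2"]) auto
  qed simp
  thus ?thesis unfolding \<psi>_def d_def by simp
qed


lemma exists_unit: "\<exists>b::'a::euclidean_space. norm b = 1"
  using nonempty_Basis by (metis ex_in_conv norm_Basis)

locale csetting =
  fixes c :: "'a::euclidean_space \<Rightarrow> 'b::euclidean_space" and c' :: "'a \<Rightarrow> 'a \<Rightarrow> 'b" and G C Lc :: real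
  assumes c_deriv: "\<forall>y. (c has_derivative c' y) (at y)"
    and c_lip: "\<forall>y y'. onorm (\<lambda>v. adjoint (c' y) v - adjoint (c' y') v) \<le> Lc * norm (y - y')"
    and Dc_bd: "\<forall>y. onorm (adjoint (c' y)) \<le> G"
    and c_bd: "\<forall>y. norm (c y) \<le> C"
begin

lemma lin: "linear (c' y)"
  using c_deriv has_derivative_bounded_linear bounded_linear.linear by blast

lemma blin_adj: "bounded_linear (adjoint (c' y))"
  using adjoint_linear[OF lin] linear_conv_bounded_linear by blast

lemma adj_bd: "norm (adjoint (c' y) v) \<le> G * norm v"
  using onorm[OF blin_adj, of y v] Dc_bd by (meson mult_right_mono norm_ge_zero order_trans)

lemma G_nonneg: "G \<ge> 0"
  using onorm_pos_le[OF blin_adj] Dc_bd by (meson order_trans)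

lemma cprime_bd: "norm (c' y v) \<le> G * norm v"
proof -
  have "(norm (c' y v))\<^sup>2 = v \<bullet> adjoint (c' y) (c' y v)"
    by (simp add: adjoint_works[OF lin] power2_norm_eq_inner)
  also have "\<dots> \<le> norm v * norm (adjoint (c' y) (c' y v))" by (rule norm_cauchy_schwarz)
  also have "\<dots> \<le> norm v * (G * norm (c' y v))" by (intro mult_left_mono adj_bd) auto
  finally have "norm (c' y v) * norm (c' y v) \<le> (G * norm v) * norm (c' y v)"
    by (simp add: power2_eq_square algebra_simps)
  thus ?thesis using G_nonneg
    by (cases "norm (c' y v) = 0") (auto simp: mult_le_cancel_right)
qed

lemma c_lipG: "norm (c y - c y') \<le> G * norm (y - y')"
proof -
  have "onorm (c' x) \<le> G" for x
    using cprime_bd G_nonneg by (intro onorm_bound) auto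
  thus ?thesis
    using differentiable_bound[of UNIV c c' G y y'] c_deriv by auto
qed

lemma Lc_nonneg: "Lc \<ge> 0"
proof -
  obtain b :: 'a where b: "norm b = 1" using exists_unit by blast
  have "bounded_linear (\<lambda>v. adjoint (c' 0) v - adjoint (c' b) v)"
    by (intro bounded_linear_sub blin_adj)
  from onorm_pos_le[OF this] c_lip[rule_format, of 0 b] b show ?thesis by simp
qed

lemma gp_lip: "norm (grad_pen c c' y - grad_pen c c' y') \<le> (G\<^sup>2 + C * Lc) * norm (y - y')"
proof -
  have "grad_pen c c' y - grad_pen c c' y' = adjoint (c' y) (c y - c y') + (adjoint (c' y) (c y') - adjoint (c' y') (c y'))"
    unfolding grad_pen_def using linear_diff[OF adjoint_linear[OF lin]] by simp
  hence "norm (grad_pen c c' y - grad_pen c c' y') \<le> norm (adjoint (c' y) (c y - c y')) + norm (adjoint (c' y) (c y') - adjoint (c' y') (c y'))"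
    by (simp add: norm_triangle_ineq)
  also have "norm (adjoint (c' y) (c y - c y')) \<le> G * (G * norm (y - y'))"
    using adj_bd[of y "c y - c y'"] c_lipG[of y y'] G_nonneg by (meson mult_left_mono order_trans)
  also have "norm (adjoint (c' y) (c y') - adjoint (c' y') (c y')) \<le> (Lc * norm (y - y')) * C"
  proof -
    have bl: "bounded_linear (\<lambda>v. adjoint (c' y) v - adjoint (c' y') v)"
      by (intro bounded_linear_sub blin_adj)
    have "norm (adjoint (c' y) (c y') - adjoint (c' y') (c y')) \<le> onorm (\<lambda>v. adjoint (c' y) v - adjoint (c' y') v) * norm (c y')"
      using onorm[OF bl] by simp
    also have "\<dots> \<le> (Lc * norm (y - y')) * C"
      using c_lip c_bd onorm_pos_le[OF bl] Lc_nonneg by (intro mult_mono) auto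
    finally show ?thesis .
  qed
  finally show ?thesis by (simp add: algebra_simps power2_eq_square)
qed

lemma pen_deriv: "((\<lambda>y. (norm (c y))\<^sup>2 / 2) has_derivative (\<lambda>v. grad_pen c c' y \<bullet> v)) (at y)"
proof -
  have "((\<lambda>y. c y \<bullet> c y) has_derivative (\<lambda>v. c y \<bullet> c' y v + c' y v \<bullet> c y)) (at y)"
    using c_deriv by (auto intro!: derivative_eq_intros)
  from has_derivative_mult_right[OF this, of "1/2"]
  have "((\<lambda>y. (c y \<bullet> c y) / 2) has_derivative (\<lambda>v. (c y \<bullet> c' y v + c' y v \<bullet> c y) / 2)) (at y)"
    by simp
  moreover have "(\<lambda>v. (c y \<bullet> c' y v + c' y v \<bullet> c y) / 2) = (\<lambda>v. grad_pen c c' y \<bullet> v)"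
    by (auto simp: fun_eq_iff grad_pen_def adjoint_works[OF lin] inner_commute)
  ultimately show ?thesis by (simp add: power2_norm_eq_inner)
qed

end

lemma algA1:
  fixes x x' z D gx :: "'a::real_inner"
  assumes "\<mu> \<noteq> 0"
  shows "gx \<bullet> (x' - x) + ((1/\<mu>) *\<^sub>R (z - \<mu> *\<^sub>R D - x')) \<bullet> (x' - x) + ((norm (x' - z))\<^sup>2 - (norm (x - z))\<^sup>2) / (2 * \<mu>)
     = - ((D - gx) \<bullet> (x' - x)) - (norm (x' - x))\<^sup>2 / (2 * \<mu>)"
  using assms unfolding power2_norm_eq_inner
  apply (simp only: inner_diff_left inner_diff_right inner_add_left inner_add_right inner_scaleR_left inner_scaleR_right)
  apply (simp only: inner_commute)
  apply (simp add: field_simps)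
  done

lemma young:
  fixes e d :: "'a::real_inner"
  assumes "\<mu> > 0"
  shows "- (e \<bullet> d) \<le> 2 * \<mu> * (norm e)\<^sup>2 + (norm d)\<^sup>2 / (8 * \<mu>)"
proof -
  have "- (e \<bullet> d) \<le> norm e * norm d" using Cauchy_Schwarz_ineq2[of e d] by linarith
  moreover have "0 \<le> (4 * \<mu> * norm e - norm d)\<^sup>2 / (8 * \<mu>)" using assms by simp
  moreover have "(4 * \<mu> * norm e - norm d)\<^sup>2 / (8 * \<mu>) = 2 * \<mu> * (norm e)\<^sup>2 - norm e * norm d + (norm d)\<^sup>2 / (8 * \<mu>)"
    using assms by (simp add: field_simps power2_eq_square)
  ultimately show ?thesis by linarith
qed

lemma algA3:
  fixes x' z p :: "'a::real_inner"
  assumes "\<mu> \<noteq> 0"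
  shows "((norm (x' - (z - \<beta> *\<^sub>R (p - x'))))\<^sup>2 - (norm (x' - z))\<^sup>2) / (2 * \<mu>) - ((1/\<mu>) *\<^sub>R (z - p)) \<bullet> ((z - \<beta> *\<^sub>R (p - x')) - z)
     = - ((\<beta> - \<beta>\<^sup>2 / 2) / \<mu>) * (norm (x' - p))\<^sup>2"
  using assms unfolding power2_norm_eq_inner
  apply (simp only: inner_diff_left inner_diff_right inner_add_left inner_add_right inner_scaleR_left inner_scaleR_right)
  apply (simp only: inner_commute)
  apply (simp add: field_simps power2_eq_square)
  done

lemma algA4:
  fixes p p' z z' :: "'a::real_inner"
  assumes "\<mu> \<noteq> 0"
  shows "((1/\<mu>) *\<^sub>R (z - p)) \<bullet> (p' - p) - ((1/\<mu>) *\<^sub>R (z - p)) \<bullet> (z' - z) + ((norm (p' - z'))\<^sup>2 - (norm (p - z))\<^sup>2) / (2 * \<mu>)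
     = (norm ((p' - z') - (p - z)))\<^sup>2 / (2 * \<mu>)"
  using assms unfolding power2_norm_eq_inner
  apply (simp only: inner_diff_left inner_diff_right inner_add_left inner_add_right inner_scaleR_left inner_scaleR_right)
  apply (simp only: inner_commute)
  apply (simp add: field_simps)
  done

locale alg = csetting c c' G C Lc
  for f :: "'a::euclidean_space \<Rightarrow> real" and gradf :: "'a \<Rightarrow> 'a"
    and gf :: "'a \<Rightarrow> 'c \<Rightarrow> 'a" and Xi :: "'c measure"
    and c :: "'a \<Rightarrow> 'b::euclidean_space" and c' :: "'a \<Rightarrow> 'a \<Rightarrow> 'b"
    and h :: "'a \<Rightarrow> ereal" and g :: "'a \<Rightarrow> real"
    and Lf Lc C G \<sigma> \<rho> \<rho>0 \<mu> \<alpha> \<beta> :: real and b0 :: nat and x0 :: 'a +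
  assumes prob: "prob_space Xi"
    and f_deriv: "\<forall>y. (f has_derivative (\<lambda>v. gradf y \<bullet> v)) (at y)"
    and h_pcc: "proper_closed_convex h"
    and g_pcc: "proper_closed_convex (\<lambda>y. ereal (g y))"
    and f_smooth: "\<forall>y y'. norm (gradf y - gradf y') \<le> Lf * norm (y - y')"
    and gradf_bd: "\<forall>y. norm (gradf y) \<le> G"
    and h_sub_bd: "\<forall>y v. is_subgradient h y v \<longrightarrow> norm v \<le> G"
    and g_sub_bd: "\<forall>y v. is_subgradient (\<lambda>y. ereal (g y)) y v \<longrightarrow> norm v \<le> G"
    and gf_meas: "(\<lambda>(y, \<xi>). gf y \<xi>) \<in> borel_measurable (borel \<Otimes>\<^sub>M Xi)"
    and A2_unbiased: "\<forall>y. integrable Xi (gf y) \<and> (\<integral>\<xi>. gf y \<xi> \<partial>Xi) = gradf y"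
    and A2_var: "\<forall>y. (\<integral>\<^sup>+ \<xi>. ennreal ((norm (gf y \<xi> - gradf y))\<^sup>2) \<partial>Xi) \<le> ennreal (\<sigma>\<^sup>2)"
    and A4_lip: "\<forall>y y'. (\<integral>\<^sup>+ \<xi>. ennreal ((norm (gf y \<xi> - gf y' \<xi>))\<^sup>2) \<partial>Xi)
                        \<le> ennreal (Lf\<^sup>2 * (norm (y - y'))\<^sup>2)"
    and rho0_pos: "\<rho>0 > 0" and rho0_le: "\<rho>0 \<le> \<rho>"
    and mu_pos: "\<mu> > 0"
    and step: "\<mu> * (\<rho> * (Lf / \<rho>0 + G\<^sup>2 + C * Lc)) \<le> 1/4"
    and alpha_lb: "0 < 32 * \<mu>\<^sup>2 * Lf\<^sup>2" "32 * \<mu>\<^sup>2 * Lf\<^sup>2 \<le> \<alpha>" and alpha_ub: "\<alpha> \<le> 1"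
    and beta: "0 < \<beta>" "\<beta> \<le> 1"
begin

definition "st \<omega> k = mossp gf c c' h g \<rho> \<mu> \<alpha> \<beta> b0 x0 \<omega> k"
definition "X \<omega> k = fst (st \<omega> k)"
definition "Z \<omega> k = fst (snd (st \<omega> k))"
definition "Dd \<omega> k = snd (snd (st \<omega> k))"
definition "gQ y = gradf y + \<rho> *\<^sub>R grad_pen c c' y"
definition "pg z = prox \<mu> (\<lambda>y. ereal (g y)) z"
definition "ph w = prox \<mu> h w"
definition "DD \<omega> k = Dd \<omega> k + \<rho> *\<^sub>R grad_pen c c' (X \<omega> k)"
definition "E \<omega> k = DD \<omega> k - gQ (X \<omega> k)"

lemma st_Suc: "st \<omega> (Suc k) = (ph (Z \<omega> k - \<mu> *\<^sub>R DD \<omega> k),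
     Z \<omega> k - \<beta> *\<^sub>R (pg (Z \<omega> k) - ph (Z \<omega> k - \<mu> *\<^sub>R DD \<omega> k)),
     gf (ph (Z \<omega> k - \<mu> *\<^sub>R DD \<omega> k)) (\<omega> (b0 + k)) + (1 - \<alpha>) *\<^sub>R (Dd \<omega> k - gf (X \<omega> k) (\<omega> (b0 + k))))"
  unfolding st_def X_def Z_def Dd_def DD_def ph_def pg_def
  by (simp add: Let_def split: prod.split)

lemma X_Suc: "X \<omega> (Suc k) = ph (Z \<omega> k - \<mu> *\<^sub>R DD \<omega> k)"
  by (simp add: X_def st_Suc)
lemma Z_Suc: "Z \<omega> (Suc k) = Z \<omega> k - \<beta> *\<^sub>R (pg (Z \<omega> k) - X \<omega> (Suc k))"
  by (simp add: Z_def st_Suc X_Suc)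
lemma Dd_Suc: "Dd \<omega> (Suc k) = gf (X \<omega> (Suc k)) (\<omega> (b0 + k)) + (1 - \<alpha>) *\<^sub>R (Dd \<omega> k - gf (X \<omega> k) (\<omega> (b0 + k)))"
  by (simp add: Dd_def st_Suc X_Suc)
lemma X_0: "X \<omega> 0 = x0" and Z_0: "Z \<omega> 0 = x0"
  by (simp_all add: X_def Z_def st_def)
lemma Dd_0: "Dd \<omega> 0 = (1 / real b0) *\<^sub>R (\<Sum>j<b0. gf x0 (\<omega> j))"
  by (simp add: Dd_def st_def)

lemma E_eq: "E \<omega> k = Dd \<omega> k - gradf (X \<omega> k)"
  by (simp add: E_def DD_def gQ_def)

lemma st_dep: "(\<And>j. j < b0 + k \<Longrightarrow> \<omega> j = \<omega>' j) \<Longrightarrow> st \<omega> k = st \<omega>' k"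
proof (induction k)
  case 0
  thus ?case by (simp add: st_def)
next
  case (Suc k)
  have "st \<omega> k = st \<omega>' k" using Suc by auto
  moreover have "\<omega> (b0 + k) = \<omega>' (b0 + k)" using Suc by auto
  ultimately show ?case unfolding st_def by (simp add: Let_def split: prod.split)
qed

lemma X_dep: assumes "\<And>j. j < b0 + k \<Longrightarrow> \<omega> j = \<omega>' j" shows "X \<omega> k = X \<omega>' k"
  unfolding X_def using st_dep[OF assms] by simp
lemma Z_dep: assumes "\<And>j. j < b0 + k \<Longrightarrow> \<omega> j = \<omega>' j" shows "Z \<omega> k = Z \<omega>' k"
  unfolding Z_def using st_dep[OF assms] by simp
lemma Dd_dep: assumes "\<And>j. j < b0 + k \<Longrightarrow> \<omega> j = \<omega>' j" shows "Dd \<omega> k = Dd \<omega>' k"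
  unfolding Dd_def using st_dep[OF assms] by simp
lemma DD_dep: assumes "\<And>j. j < b0 + k \<Longrightarrow> \<omega> j = \<omega>' j" shows "DD \<omega> k = DD \<omega>' k"
  unfolding DD_def using X_dep[OF assms] Dd_dep[OF assms] by simp
lemma E_dep: assumes "\<And>j. j < b0 + k \<Longrightarrow> \<omega> j = \<omega>' j" shows "E \<omega> k = E \<omega>' k"
  unfolding E_def using X_dep[OF assms] DD_dep[OF assms] by simp
lemma X_Suc_dep: assumes "\<And>j. j < b0 + k \<Longrightarrow> \<omega> j = \<omega>' j" shows "X \<omega> (Suc k) = X \<omega>' (Suc k)"
  unfolding X_Suc using Z_dep[OF assms] DD_dep[OF assms] by simp

end

lemma seq_space_intro: "prob_space Xi \<Longrightarrow> sequence_space Xi"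
  unfolding sequence_space_def product_prob_space_def product_prob_space_axioms_def product_sigma_finite_def
  by (auto intro: prob_space_imp_sigma_finite)

lemma PiM_split_coord:
  fixes Xi :: "'c measure" and G :: "(nat \<Rightarrow> 'c) \<times> 'c \<Rightarrow> ennreal"
  assumes P: "prob_space Xi"
    and Gm: "G \<in> borel_measurable (PiM UNIV (\<lambda>_. Xi) \<Otimes>\<^sub>M Xi)"
    and dep: "\<And>\<omega> \<omega>' \<xi>. (\<And>j. j < n \<Longrightarrow> \<omega> j = \<omega>' j) \<Longrightarrow> G (\<omega>, \<xi>) = G (\<omega>', \<xi>)"
  shows "(\<integral>\<^sup>+\<omega>. G (\<omega>, \<omega> n) \<partial>PiM UNIV (\<lambda>_. Xi)) = (\<integral>\<^sup>+\<omega>. (\<integral>\<^sup>+\<xi>. G (\<omega>, \<xi>) \<partial>Xi) \<partial>PiM UNIV (\<lambda>_. Xi))"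
proof -
  interpret S: sequence_space Xi by (rule seq_space_intro[OF P])
  let ?S = "PiM UNIV (\<lambda>_::nat. Xi)"
  have m1: "(\<lambda>\<omega>. G (\<omega>, \<omega> n)) \<in> borel_measurable ?S"
    using Gm by measurable
  have mc: "(\<lambda>(\<omega>, \<omega>'). comb_seq n \<omega> \<omega>') \<in> measurable (?S \<Otimes>\<^sub>M ?S) ?S"
    by (rule measurable_comb_seq)
  have "(\<integral>\<^sup>+\<omega>. G (\<omega>, \<omega> n) \<partial>?S) = (\<integral>\<^sup>+\<omega>. G (\<omega>, \<omega> n) \<partial>distr (?S \<Otimes>\<^sub>M ?S) ?S (\<lambda>(\<omega>, \<omega>'). comb_seq n \<omega> \<omega>'))"
    using S.PiM_comb_seq[of n] by simp
  also have "\<dots> = (\<integral>\<^sup>+p. G (comb_seq n (fst p) (snd p), comb_seq n (fst p) (snd p) n) \<partial>(?S \<Otimes>\<^sub>M ?S))"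
    apply (subst nn_integral_distr[OF mc])
    using m1 apply simp
    apply (simp add: split_beta)
    done
  also have "\<dots> = (\<integral>\<^sup>+p. G (fst p, snd p 0) \<partial>(?S \<Otimes>\<^sub>M ?S))"
  proof (rule nn_integral_cong)
    fix p :: "(nat \<Rightarrow> 'c) \<times> (nat \<Rightarrow> 'c)"
    have "comb_seq n (fst p) (snd p) n = snd p 0" using comb_seq_add[of n "fst p" "snd p" 0] by simp
    moreover have "G (comb_seq n (fst p) (snd p), \<xi>) = G (fst p, \<xi>)" for \<xi>
      by (rule dep) (simp add: comb_seq_less)
    ultimately show "G (comb_seq n (fst p) (snd p), comb_seq n (fst p) (snd p) n) = G (fst p, snd p 0)" by simp
  qed
  also have "\<dots> = (\<integral>\<^sup>+\<omega>. (\<integral>\<^sup>+\<omega>'. G (\<omega>, \<omega>' 0) \<partial>?S) \<partial>?S)"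
  proof -
    have "(\<lambda>p. G (fst p, snd p 0)) \<in> borel_measurable (?S \<Otimes>\<^sub>M ?S)" using Gm by measurable
    from S.nn_integral_fst[OF this] show ?thesis by simp
  qed
  also have "\<dots> = (\<integral>\<^sup>+\<omega>. (\<integral>\<^sup>+\<xi>. G (\<omega>, \<xi>) \<partial>Xi) \<partial>?S)"
  proof (rule nn_integral_cong)
    fix \<omega> assume \<omega>: "\<omega> \<in> space ?S"
    have gm: "(\<lambda>\<xi>. G (\<omega>, \<xi>)) \<in> borel_measurable Xi" using Gm \<omega> by measurable
    have "(\<integral>\<^sup>+\<omega>'. G (\<omega>, \<omega>' 0) \<partial>?S) = (\<integral>\<^sup>+\<xi>. G (\<omega>, \<xi>) \<partial>distr ?S Xi (\<lambda>\<omega>'. \<omega>' 0))"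
      by (subst nn_integral_distr) (auto intro: gm)
    also have "distr ?S Xi (\<lambda>\<omega>'. \<omega>' 0) = Xi"
      by (rule distr_PiM_component) (auto intro: P)
    finally show "(\<integral>\<^sup>+\<omega>'. G (\<omega>, \<omega>' 0) \<partial>?S) = (\<integral>\<^sup>+\<xi>. G (\<omega>, \<xi>) \<partial>Xi)" .
  qed
  finally show ?thesis .
qed


lemma sq_integrable:
  fixes F :: "'c \<Rightarrow> 'a::euclidean_space"
  assumes P: "prob_space Xi" and Fm: "F \<in> borel_measurable Xi"
    and B: "(\<integral>\<^sup>+\<xi>. ennreal ((norm (F \<xi>))\<^sup>2) \<partial>Xi) \<le> ennreal B" and B0: "B \<ge> 0"
  shows "integrable Xi (\<lambda>\<xi>. (norm (F \<xi>))\<^sup>2)" and "(\<integral>\<xi>. (norm (F \<xi>))\<^sup>2 \<partial>Xi) \<le> B"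
proof -
  show I: "integrable Xi (\<lambda>\<xi>. (norm (F \<xi>))\<^sup>2)"
    by (rule integrableI_nonneg) (use Fm B in \<open>auto simp: less_top[symmetric] top_unique intro: le_less_trans[OF _ ennreal_less_top]\<close>)
  have "ennreal (\<integral>\<xi>. (norm (F \<xi>))\<^sup>2 \<partial>Xi) = (\<integral>\<^sup>+\<xi>. ennreal ((norm (F \<xi>))\<^sup>2) \<partial>Xi)"
    by (rule nn_integral_eq_integral[OF I, symmetric]) auto
  with B have "ennreal (\<integral>\<xi>. (norm (F \<xi>))\<^sup>2 \<partial>Xi) \<le> ennreal B" by simp
  thus "(\<integral>\<xi>. (norm (F \<xi>))\<^sup>2 \<partial>Xi) \<le> B" using ennreal_le_iff[OF B0] by blast
qed

lemma norm_add_sq_le2: "(norm (u + v))\<^sup>2 \<le> 2 * (norm u)\<^sup>2 + 2 * (norm v)\<^sup>2" for u v :: "'a::real_normed_vector"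
proof -
  have "(norm (u + v))\<^sup>2 \<le> (norm u + norm v)\<^sup>2" by (simp add: norm_triangle_ineq power_mono)
  also have "\<dots> \<le> 2 * (norm u)\<^sup>2 + 2 * (norm v)\<^sup>2"
    by (smt (verit, best) power2_diff power2_sum zero_le_power2)
  finally show ?thesis .
qed

lemma noise_bound:
  fixes gf :: "'a::euclidean_space \<Rightarrow> 'c \<Rightarrow> 'a" and gradf :: "'a \<Rightarrow> 'a"
  assumes P: "prob_space Xi" and gm: "\<And>y. gf y \<in> borel_measurable Xi"
    and unb: "\<forall>y. integrable Xi (gf y) \<and> (\<integral>\<xi>. gf y \<xi> \<partial>Xi) = gradf y"
    and var: "\<forall>y. (\<integral>\<^sup>+ \<xi>. ennreal ((norm (gf y \<xi> - gradf y))\<^sup>2) \<partial>Xi) \<le> ennreal (\<sigma>\<^sup>2)"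
    and lip: "\<forall>y y'. (\<integral>\<^sup>+ \<xi>. ennreal ((norm (gf y \<xi> - gf y' \<xi>))\<^sup>2) \<partial>Xi) \<le> ennreal (Lf\<^sup>2 * (norm (y - y'))\<^sup>2)"
    and al: "0 \<le> \<alpha>" "\<alpha> \<le> 1"
  shows "(\<integral>\<^sup>+\<xi>. ennreal ((norm (a + ((gf x' \<xi> - gradf x') - (1 - \<alpha>) *\<^sub>R (gf x \<xi> - gradf x))))\<^sup>2) \<partial>Xi)
     \<le> ennreal ((norm a)\<^sup>2 + 2 * \<alpha>\<^sup>2 * \<sigma>\<^sup>2 + 2 * Lf\<^sup>2 * (norm (x' - x))\<^sup>2)"
proof -
  interpret prob_space Xi by (rule P)
  define Y where "Y \<xi> = gf x' \<xi> - gradf x'" for \<xi>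
  define V where "V \<xi> = gf x' \<xi> - gf x \<xi>" for \<xi>
  define m where "m = gradf x' - gradf x"
  define W where "W \<xi> = V \<xi> - m" for \<xi>
  define N where "N \<xi> = \<alpha> *\<^sub>R Y \<xi> + (1 - \<alpha>) *\<^sub>R W \<xi>" for \<xi>
  have Neq: "(gf x' \<xi> - gradf x') - (1 - \<alpha>) *\<^sub>R (gf x \<xi> - gradf x) = N \<xi>" for \<xi>
    unfolding N_def Y_def W_def V_def m_def by (simp add: algebra_simps)
  have ig: "integrable Xi (gf y)" for y using unb by blast
  have Im: "Y \<in> borel_measurable Xi" "V \<in> borel_measurable Xi" "W \<in> borel_measurable Xi" "N \<in> borel_measurable Xi"
    unfolding N_def W_def V_def Y_def using gm by measurable
  have IY: "integrable Xi Y" unfolding Y_def using ig by auto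
  have IV: "integrable Xi V" unfolding V_def using ig by auto
  have IW: "integrable Xi W" unfolding W_def using IV by auto
  have IN: "integrable Xi N" unfolding N_def using IY IW by auto
  have intV: "(\<integral>\<xi>. V \<xi> \<partial>Xi) = m" unfolding V_def m_def using ig unb by (simp add: Bochner_Integration.integral_diff)
  have intY: "(\<integral>\<xi>. Y \<xi> \<partial>Xi) = 0" unfolding Y_def using ig unb by (simp add: Bochner_Integration.integral_diff prob_space)
  have intW: "(\<integral>\<xi>. W \<xi> \<partial>Xi) = 0" unfolding W_def using IV intV by (simp add: Bochner_Integration.integral_diff prob_space)
  have intN: "(\<integral>\<xi>. N \<xi> \<partial>Xi) = 0" unfolding N_def using IY IW intY intW by simp
  have Y2: "integrable Xi (\<lambda>\<xi>. (norm (Y \<xi>))\<^sup>2)" "(\<integral>\<xi>. (norm (Y \<xi>))\<^sup>2 \<partial>Xi) \<le> \<sigma>\<^sup>2"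
    using sq_integrable[OF P Im(1), of "\<sigma>\<^sup>2"] var unfolding Y_def by auto
  have V2: "integrable Xi (\<lambda>\<xi>. (norm (V \<xi>))\<^sup>2)" "(\<integral>\<xi>. (norm (V \<xi>))\<^sup>2 \<partial>Xi) \<le> Lf\<^sup>2 * (norm (x' - x))\<^sup>2"
    using sq_integrable[OF P Im(2), of "Lf\<^sup>2 * (norm (x' - x))\<^sup>2"] lip unfolding V_def by auto
  have W2eq: "(norm (W \<xi>))\<^sup>2 = (norm (V \<xi>))\<^sup>2 - 2 * (V \<xi> \<bullet> m) + (norm m)\<^sup>2" for \<xi>
    unfolding W_def power2_norm_eq_inner by (simp add: inner_diff_left inner_diff_right inner_commute)
  have IVm: "integrable Xi (\<lambda>\<xi>. V \<xi> \<bullet> m)" using IV by auto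
  have W2: "integrable Xi (\<lambda>\<xi>. (norm (W \<xi>))\<^sup>2)" unfolding W2eq using V2(1) IVm by auto
  have intW2: "(\<integral>\<xi>. (norm (W \<xi>))\<^sup>2 \<partial>Xi) \<le> Lf\<^sup>2 * (norm (x' - x))\<^sup>2"
  proof -
    have "(\<integral>\<xi>. (norm (W \<xi>))\<^sup>2 \<partial>Xi) = (\<integral>\<xi>. (norm (V \<xi>))\<^sup>2 \<partial>Xi) - 2 * (m \<bullet> m) + (norm m)\<^sup>2"
      unfolding W2eq using V2(1) IVm IV intV by (simp add: Bochner_Integration.integral_diff prob_space)
    also have "\<dots> = (\<integral>\<xi>. (norm (V \<xi>))\<^sup>2 \<partial>Xi) - (norm m)\<^sup>2" by (simp add: power2_norm_eq_inner)
    finally show ?thesis using V2(2) by (smt (verit) zero_le_power2)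
  qed
  define B where "B \<xi> = 2 * \<alpha>\<^sup>2 * (norm (Y \<xi>))\<^sup>2 + 2 * (1 - \<alpha>)\<^sup>2 * (norm (W \<xi>))\<^sup>2" for \<xi>
  have IB: "integrable Xi B" unfolding B_def using Y2(1) W2 by auto
  have NB: "(norm (N \<xi>))\<^sup>2 \<le> B \<xi>" for \<xi>
    using norm_add_sq_le2[of "\<alpha> *\<^sub>R Y \<xi>" "(1 - \<alpha>) *\<^sub>R W \<xi>"] unfolding N_def B_def
    by (simp add: power_mult_distrib)
  have N2: "integrable Xi (\<lambda>\<xi>. (norm (N \<xi>))\<^sup>2)"
    by (rule Bochner_Integration.integrable_bound[OF IB]) (use Im NB in \<open>auto intro!: AE_I2 order_trans[OF _ abs_ge_self]\<close>)
  have intN2: "(\<integral>\<xi>. (norm (N \<xi>))\<^sup>2 \<partial>Xi) \<le> 2 * \<alpha>\<^sup>2 * \<sigma>\<^sup>2 + 2 * Lf\<^sup>2 * (norm (x' - x))\<^sup>2"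
  proof -
    have "(\<integral>\<xi>. (norm (N \<xi>))\<^sup>2 \<partial>Xi) \<le> (\<integral>\<xi>. B \<xi> \<partial>Xi)" by (rule integral_mono[OF N2 IB NB])
    also have "\<dots> = 2 * \<alpha>\<^sup>2 * (\<integral>\<xi>. (norm (Y \<xi>))\<^sup>2 \<partial>Xi) + 2 * (1 - \<alpha>)\<^sup>2 * (\<integral>\<xi>. (norm (W \<xi>))\<^sup>2 \<partial>Xi)"
      unfolding B_def using Y2(1) W2 by simp
    also have "\<dots> \<le> 2 * \<alpha>\<^sup>2 * \<sigma>\<^sup>2 + 2 * 1 * (Lf\<^sup>2 * (norm (x' - x))\<^sup>2)"
    proof (intro add_mono mult_left_mono mult_mono)
      show "(1 - \<alpha>)\<^sup>2 \<le> 1" using al by (simp add: power_le_one)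
    qed (use Y2(2) intW2 al in auto)
    finally show ?thesis by simp
  qed
  have A2eq: "(norm (a + N \<xi>))\<^sup>2 = (norm a)\<^sup>2 + 2 * (a \<bullet> N \<xi>) + (norm (N \<xi>))\<^sup>2" for \<xi>
    unfolding power2_norm_eq_inner by (simp add: inner_add_left inner_add_right inner_commute)
  have IaN: "integrable Xi (\<lambda>\<xi>. a \<bullet> N \<xi>)" using IN by auto
  have IA: "integrable Xi (\<lambda>\<xi>. (norm (a + N \<xi>))\<^sup>2)" unfolding A2eq using IaN N2 by auto
  have "(\<integral>\<xi>. (norm (a + N \<xi>))\<^sup>2 \<partial>Xi) = (norm a)\<^sup>2 + 2 * (a \<bullet> (\<integral>\<xi>. N \<xi> \<partial>Xi)) + (\<integral>\<xi>. (norm (N \<xi>))\<^sup>2 \<partial>Xi)"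
    unfolding A2eq using IaN N2 IN by (simp add: prob_space)
  also have "\<dots> = (norm a)\<^sup>2 + (\<integral>\<xi>. (norm (N \<xi>))\<^sup>2 \<partial>Xi)" using intN by simp
  finally have intA: "(\<integral>\<xi>. (norm (a + N \<xi>))\<^sup>2 \<partial>Xi) \<le> (norm a)\<^sup>2 + 2 * \<alpha>\<^sup>2 * \<sigma>\<^sup>2 + 2 * Lf\<^sup>2 * (norm (x' - x))\<^sup>2"
    using intN2 by linarith
  have "(\<integral>\<^sup>+\<xi>. ennreal ((norm (a + N \<xi>))\<^sup>2) \<partial>Xi) = ennreal (\<integral>\<xi>. (norm (a + N \<xi>))\<^sup>2 \<partial>Xi)"
    by (rule nn_integral_eq_integral[OF IA]) auto
  also have "\<dots> \<le> ennreal ((norm a)\<^sup>2 + 2 * \<alpha>\<^sup>2 * \<sigma>\<^sup>2 + 2 * Lf\<^sup>2 * (norm (x' - x))\<^sup>2)"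
    using intA by (rule ennreal_leI)
  finally show ?thesis unfolding Neq .
qed

context alg begin

lemma Lf_nonneg: "Lf \<ge> 0"
proof -
  obtain b :: 'a where b: "norm b = 1" using exists_unit by blast
  have "norm (gradf 0 - gradf b) \<le> Lf * norm (0 - b)" using f_smooth by blast
  moreover have "norm (0 - b) = 1" using b by simp
  ultimately have "norm (gradf 0 - gradf b) \<le> Lf" by simp
  thus ?thesis using norm_ge_zero order_trans by blast
qed

lemma rho_pos: "\<rho> > 0" using rho0_pos rho0_le by simp

lemma C_nonneg: "C \<ge> 0" using c_bd norm_ge_zero order_trans by blast

definition "LQ = Lf + \<rho> * (G\<^sup>2 + C * Lc)"

lemma LQ_nonneg: "LQ \<ge> 0"
  unfolding LQ_def using Lf_nonneg rho_pos C_nonneg Lc_nonneg by (simp add: add_nonneg_nonneg)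

lemma gQ_lip: "norm (gQ y - gQ y') \<le> LQ * norm (y - y')"
proof -
  have "gQ y - gQ y' = (gradf y - gradf y') + \<rho> *\<^sub>R (grad_pen c c' y - grad_pen c c' y')"
    by (simp add: gQ_def algebra_simps)
  moreover have "norm (\<rho> *\<^sub>R (grad_pen c c' y - grad_pen c c' y')) = \<rho> * norm (grad_pen c c' y - grad_pen c c' y')"
    using rho_pos by simp
  ultimately have "norm (gQ y - gQ y') \<le> norm (gradf y - gradf y') + \<rho> * norm (grad_pen c c' y - grad_pen c c' y')"
    using norm_triangle_ineq[of "gradf y - gradf y'" "\<rho> *\<^sub>R (grad_pen c c' y - grad_pen c c' y')"] by (simp add: abs_of_pos[OF rho_pos])
  also have "\<dots> \<le> Lf * norm (y - y') + \<rho> * ((G\<^sup>2 + C * Lc) * norm (y - y'))"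
    using f_smooth gp_lip rho_pos by (intro add_mono mult_left_mono) auto
  finally show ?thesis by (simp add: LQ_def algebra_simps)
qed

lemma muLQ: "\<mu> * LQ \<le> 1/4"
proof -
  have "Lf * \<rho>0 \<le> Lf * \<rho>" using mult_left_mono[OF rho0_le Lf_nonneg] .
  hence "Lf \<le> \<rho> * (Lf / \<rho>0)" using rho0_pos by (simp add: field_simps)
  hence "LQ \<le> \<rho> * (Lf / \<rho>0 + G\<^sup>2 + C * Lc)" unfolding LQ_def by (simp add: algebra_simps)
  hence "\<mu> * LQ \<le> \<mu> * (\<rho> * (Lf / \<rho>0 + G\<^sup>2 + C * Lc))" using mu_pos by simp
  thus ?thesis using step by linarith
qed

definition "Q y = f y + \<rho> * ((norm (c y))\<^sup>2 / 2)"

lemma Q_deriv: "(Q has_derivative (\<lambda>v. gQ y \<bullet> v)) (at y)"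
proof -
  have "(Q has_derivative (\<lambda>v. gradf y \<bullet> v + \<rho> * (grad_pen c c' y \<bullet> v))) (at y)"
    unfolding Q_def using f_deriv pen_deriv by (intro has_derivative_add has_derivative_mult_right) auto
  moreover have "(\<lambda>v. gradf y \<bullet> v + \<rho> * (grad_pen c c' y \<bullet> v)) = (\<lambda>v. gQ y \<bullet> v)"
    by (auto simp: gQ_def inner_add_left fun_eq_iff)
  ultimately show ?thesis by simp
qed

lemma Q_descent: "Q y \<le> Q x + gQ x \<bullet> (y - x) + LQ / 2 * (norm (y - x))\<^sup>2"
  by (rule descent_lemma[OF Q_deriv gQ_lip LQ_nonneg])

definition "Pot x z = f x + \<rho> / 2 * (norm (c x))\<^sup>2 + real_of_ereal (h x) + (norm (x - z))\<^sup>2 / (2 * \<mu>) - moreau \<mu> g z"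

lemma ph_fin: "\<bar>h (ph w)\<bar> \<noteq> \<infinity>"
  unfolding ph_def by (rule prox_finite[OF h_pcc mu_pos])

lemma one_step:
  fixes x z D :: 'a
  assumes hx: "h x = ereal a"
  defines "x' \<equiv> ph (z - \<mu> *\<^sub>R D)"
  defines "p \<equiv> pg z"
  defines "z' \<equiv> z - \<beta> *\<^sub>R (p - x')"
  shows "Pot x' z' + (norm (x' - x))\<^sup>2 / (4 * \<mu>) + \<beta> / (2 * \<mu>) * (norm (x' - p))\<^sup>2
     \<le> Pot x z + 2 * \<mu> * (norm (D - gQ x))\<^sup>2"
proof -
  have mu0: "\<mu> \<noteq> 0" using mu_pos by simp
  obtain a' where ha': "h x' = ereal a'" using ph_fin[of "z - \<mu> *\<^sub>R D"] unfolding x'_def by (cases "h (ph (z - \<mu> *\<^sub>R D))") auto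
  define vh where "vh = (1/\<mu>) *\<^sub>R (z - \<mu> *\<^sub>R D - x')"
  have sgh: "is_subgradient h x' vh"
    unfolding vh_def x'_def ph_def using prox_subgrad[OF h_pcc mu_pos, of "z - \<mu> *\<^sub>R D"] by simp
  have s1: "a \<ge> a' + vh \<bullet> (x - x')" by (rule subgrad_finite_ineq[OF sgh ha' hx])
  have s1': "vh \<bullet> (x - x') = - (vh \<bullet> (x' - x))"
    by (metis inner_minus_right minus_diff_eq)
  have qd: "Q x' \<le> Q x + gQ x \<bullet> (x' - x) + LQ / 2 * (norm (x' - x))\<^sup>2" by (rule Q_descent)
  have a1: "gQ x \<bullet> (x' - x) + vh \<bullet> (x' - x) + ((norm (x' - z))\<^sup>2 - (norm (x - z))\<^sup>2) / (2 * \<mu>)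
     = - ((D - gQ x) \<bullet> (x' - x)) - (norm (x' - x))\<^sup>2 / (2 * \<mu>)"
    unfolding vh_def by (rule algA1[OF mu0])
  have yg: "- ((D - gQ x) \<bullet> (x' - x)) \<le> 2 * \<mu> * (norm (D - gQ x))\<^sup>2 + (norm (x' - x))\<^sup>2 / (8 * \<mu>)"
    by (rule young[OF mu_pos])
  have lq: "LQ / 2 * (norm (x' - x))\<^sup>2 \<le> (norm (x' - x))\<^sup>2 / (8 * \<mu>)"
  proof -
    have "LQ \<le> 1 / (4 * \<mu>)" using muLQ mu_pos by (simp add: field_simps)
    hence "LQ / 2 * (norm (x' - x))\<^sup>2 \<le> (1 / (4 * \<mu>)) / 2 * (norm (x' - x))\<^sup>2"
      by (intro mult_right_mono divide_right_mono) auto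
    thus ?thesis by (simp add: field_simps)
  qed
  have q4: "(norm (x' - x))\<^sup>2 / (4 * \<mu>) = 2 * ((norm (x' - x))\<^sup>2 / (8 * \<mu>))"
    and q2: "(norm (x' - x))\<^sup>2 / (2 * \<mu>) = 4 * ((norm (x' - x))\<^sup>2 / (8 * \<mu>))" by (simp_all add: field_simps)
  define vg where "vg = (1/\<mu>) *\<^sub>R (z - p)"
  define p' where "p' = pg z'"
  have sgg: "is_subgradient (\<lambda>y. ereal (g y)) p vg"
    unfolding vg_def p_def pg_def by (rule prox_subgrad[OF g_pcc mu_pos])
  have s2: "g p' \<ge> g p + vg \<bullet> (p' - p)" by (rule subgrad_finite_ineq[OF sgg]) auto
  have Mz: "moreau \<mu> g z = g p + (norm (p - z))\<^sup>2 / (2 * \<mu>)"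
    unfolding p_def pg_def by (rule moreau_props(1)[OF g_pcc mu_pos])
  have Mz': "moreau \<mu> g z' = g p' + (norm (p' - z'))\<^sup>2 / (2 * \<mu>)"
    unfolding p'_def pg_def by (rule moreau_props(1)[OF g_pcc mu_pos])
  have a4: "vg \<bullet> (p' - p) - vg \<bullet> (z' - z) + ((norm (p' - z'))\<^sup>2 - (norm (p - z))\<^sup>2) / (2 * \<mu>)
     = (norm ((p' - z') - (p - z)))\<^sup>2 / (2 * \<mu>)"
    unfolding vg_def by (rule algA4[OF mu0])
  have a4': "(norm ((p' - z') - (p - z)))\<^sup>2 / (2 * \<mu>) \<ge> 0" using mu_pos by simp
  have a3: "((norm (x' - z'))\<^sup>2 - (norm (x' - z))\<^sup>2) / (2 * \<mu>) - vg \<bullet> (z' - z)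
     = - ((\<beta> - \<beta>\<^sup>2 / 2) / \<mu>) * (norm (x' - p))\<^sup>2"
    unfolding vg_def z'_def by (rule algA3[OF mu0])
  have bb: "((\<beta> - \<beta>\<^sup>2 / 2) / \<mu>) * (norm (x' - p))\<^sup>2 \<ge> \<beta> / (2 * \<mu>) * (norm (x' - p))\<^sup>2"
  proof -
    have "\<beta>\<^sup>2 \<le> \<beta>" using beta by (simp add: power2_eq_square mult_le_cancel_right1)
    hence "(\<beta> - \<beta>\<^sup>2 / 2) / \<mu> \<ge> \<beta> / (2 * \<mu>)" using mu_pos by (simp add: field_simps)
    thus ?thesis by (intro mult_right_mono) auto
  qed
  have P1: "Pot x' z' = Q x' + a' + (norm (x' - z'))\<^sup>2 / (2 * \<mu>) - moreau \<mu> g z'"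
    unfolding Pot_def Q_def using ha' by simp
  have P0: "Pot x z = Q x + a + (norm (x - z))\<^sup>2 / (2 * \<mu>) - moreau \<mu> g z"
    unfolding Pot_def Q_def using hx by simp
  have d1: "((norm (x' - z))\<^sup>2 - (norm (x - z))\<^sup>2) / (2 * \<mu>) = (norm (x' - z))\<^sup>2 / (2 * \<mu>) - (norm (x - z))\<^sup>2 / (2 * \<mu>)"
    and d2: "((norm (x' - z'))\<^sup>2 - (norm (x' - z))\<^sup>2) / (2 * \<mu>) = (norm (x' - z'))\<^sup>2 / (2 * \<mu>) - (norm (x' - z))\<^sup>2 / (2 * \<mu>)"
    and d3: "((norm (p' - z'))\<^sup>2 - (norm (p - z))\<^sup>2) / (2 * \<mu>) = (norm (p' - z'))\<^sup>2 / (2 * \<mu>) - (norm (p - z))\<^sup>2 / (2 * \<mu>)"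
    by (simp_all add: diff_divide_distrib)
  show ?thesis
    using P1 P0 Mz Mz' s1 s1' qd a1 yg lq q4 q2 s2 a4 a4' a3 bb d1 d2 d3 by linarith
qed


lemma norm3_sq: "(norm (a + b + w))\<^sup>2 \<le> 3 * ((norm a)\<^sup>2 + (norm b)\<^sup>2 + (norm w)\<^sup>2)" for a b w :: 'a
proof -
  have "norm (a + b + w) \<le> norm a + norm b + norm w" by (meson norm_triangle_le norm_triangle_ineq add_mono order_refl)
  hence "(norm (a + b + w))\<^sup>2 \<le> (norm a + norm b + norm w)\<^sup>2" by (simp add: power_mono)
  also have "\<dots> \<le> 3 * ((norm a)\<^sup>2 + (norm b)\<^sup>2 + (norm w)\<^sup>2)"
    using sum_squares_ge_zero by (smt (verit, best) power2_diff power2_sum zero_le_power2)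
  finally show ?thesis .
qed

lemma u_bound:
  fixes x z D :: 'a
  defines "x' \<equiv> ph (z - \<mu> *\<^sub>R D)"
  defines "p \<equiv> pg z"
  shows "(norm (gQ x' - D + (1 / \<mu>) *\<^sub>R (p - x')))\<^sup>2
     \<le> 3 * (LQ\<^sup>2 * (norm (x' - x))\<^sup>2 + (norm (D - gQ x))\<^sup>2 + (norm (x' - p))\<^sup>2 / \<mu>\<^sup>2)"
proof -
  have eq: "gQ x' - D + (1 / \<mu>) *\<^sub>R (p - x') = (gQ x' - gQ x) + (-(D - gQ x)) + (-(1 / \<mu>)) *\<^sub>R (x' - p)"
    by (simp add: algebra_simps)
  have "(norm (gQ x' - gQ x))\<^sup>2 \<le> (LQ * norm (x' - x))\<^sup>2"
    using gQ_lip[of x' x] by (simp add: power_mono)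
  moreover have "(norm ((-(1 / \<mu>)) *\<^sub>R (x' - p)))\<^sup>2 = (norm (x' - p))\<^sup>2 / \<mu>\<^sup>2"
    using mu_pos by (simp add: power_divide power_mult_distrib)
  ultimately show ?thesis
    using norm3_sq[of "gQ x' - gQ x" "-(D - gQ x)" "(-(1 / \<mu>)) *\<^sub>R (x' - p)"] unfolding eq
    by (simp add: power_mult_distrib norm_minus_commute[of "gQ x" D])
qed

lemma pen_bound:
  fixes z D :: 'a
  defines "x' \<equiv> ph (z - \<mu> *\<^sub>R D)"
  defines "p \<equiv> pg z"
  shows "\<rho>\<^sup>2 * (norm (grad_pen c c' x'))\<^sup>2 \<le> 2 * (norm (gQ x' - D + (1 / \<mu>) *\<^sub>R (p - x')))\<^sup>2 + 18 * G\<^sup>2"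
proof -
  define u where "u = gQ x' - D + (1 / \<mu>) *\<^sub>R (p - x')"
  define vh where "vh = (1/\<mu>) *\<^sub>R (z - \<mu> *\<^sub>R D - x')"
  define vg where "vg = (1/\<mu>) *\<^sub>R (z - p)"
  have sgh: "is_subgradient h x' vh"
    unfolding vh_def x'_def ph_def using prox_subgrad[OF h_pcc mu_pos, of "z - \<mu> *\<^sub>R D"] by simp
  have sgg: "is_subgradient (\<lambda>y. ereal (g y)) p vg"
    unfolding vg_def p_def pg_def by (rule prox_subgrad[OF g_pcc mu_pos])
  have nvh: "norm vh \<le> G" using h_sub_bd sgh by blast
  have nvg: "norm vg \<le> G" using g_sub_bd sgg by blast
  have ngf: "norm (gradf x') \<le> G" using gradf_bd by blast
  have eq: "\<rho> *\<^sub>R grad_pen c c' x' = u - gradf x' - vh + vg"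
    unfolding u_def vh_def vg_def gQ_def using mu_pos by (simp add: algebra_simps)
  have "norm (\<rho> *\<^sub>R grad_pen c c' x') \<le> norm u + 3 * G"
  proof -
    have "norm (u - gradf x' - vh + vg) \<le> norm u + norm (gradf x') + norm vh + norm vg"
      by (smt (verit, best) norm_triangle_ineq norm_triangle_ineq4)
    thus ?thesis using eq nvh nvg ngf by simp
  qed
  hence "\<rho> * norm (grad_pen c c' x') \<le> norm u + 3 * G" using rho_pos by simp
  hence "(\<rho> * norm (grad_pen c c' x'))\<^sup>2 \<le> (norm u + 3 * G)\<^sup>2"
    using rho_pos by (intro power_mono) auto
  also have "\<dots> \<le> 2 * (norm u)\<^sup>2 + 18 * G\<^sup>2"
    by (smt (verit, best) power2_diff power2_sum zero_le_power2 power_mult_distrib)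
  finally show ?thesis unfolding u_def by (simp add: power_mult_distrib)
qed

definition "Nf x x' \<xi> = (gf x' \<xi> - gradf x') - (1 - \<alpha>) *\<^sub>R (gf x \<xi> - gradf x)"

lemma E_Suc: "E \<omega> (Suc k) = (1 - \<alpha>) *\<^sub>R E \<omega> k + Nf (X \<omega> k) (X \<omega> (Suc k)) (\<omega> (b0 + k))"
  unfolding E_eq Dd_Suc Nf_def by (simp add: algebra_simps)

end

lemma telescope:
  fixes v ep cx pp :: "nat \<Rightarrow> real"
  assumes nn: "\<And>k. v k \<ge> 0" "\<And>k. ep k \<ge> 0" "\<And>k. cx k \<ge> 0" "\<And>k. pp k \<ge> 0"
    and s1: "\<And>k. v (Suc k) + cx k / (4 * \<mu>) + \<beta> / (2 * \<mu>) * pp k \<le> v k + 2 * \<mu> * ep k"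
    and s2: "\<And>k. ep (Suc k) + \<alpha> * ep k \<le> ep k + 2 * \<alpha>\<^sup>2 * \<sigma>\<^sup>2 + 2 * Lf\<^sup>2 * cx k"
    and mu: "\<mu> > 0" and al: "\<alpha> > 0" "32 * \<mu>\<^sup>2 * Lf\<^sup>2 \<le> \<alpha>"
  shows "(\<Sum>k<K. cx k) / (8 * \<mu>) + \<beta> / (2 * \<mu>) * (\<Sum>k<K. pp k) \<le> v 0 + (2 * \<mu> / \<alpha>) * ep 0 + 4 * real K * \<mu> * \<alpha> * \<sigma>\<^sup>2"
    and "\<alpha> * (\<Sum>k<K. ep k) \<le> ep 0 + 2 * real K * \<alpha>\<^sup>2 * \<sigma>\<^sup>2 + 2 * Lf\<^sup>2 * (\<Sum>k<K. cx k)"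
proof -
  define \<Phi> where "\<Phi> k = v k + (2 * \<mu> / \<alpha>) * ep k" for k
  have cLf: "4 * \<mu> * Lf\<^sup>2 / \<alpha> \<le> 1 / (8 * \<mu>)" using al mu by (simp add: field_simps power2_eq_square)
  have step: "\<Phi> (Suc k) + cx k / (8 * \<mu>) + \<beta> / (2 * \<mu>) * pp k \<le> \<Phi> k + 4 * \<mu> * \<alpha> * \<sigma>\<^sup>2" for k
  proof -
    have "(2 * \<mu> / \<alpha>) * (ep (Suc k) + \<alpha> * ep k) \<le> (2 * \<mu> / \<alpha>) * (ep k + 2 * \<alpha>\<^sup>2 * \<sigma>\<^sup>2 + 2 * Lf\<^sup>2 * cx k)"
      using s2[of k] mu al by (intro mult_left_mono) auto
    hence "(2 * \<mu> / \<alpha>) * ep (Suc k) + 2 * \<mu> * ep k \<le> (2 * \<mu> / \<alpha>) * ep k + 4 * \<mu> * \<alpha> * \<sigma>\<^sup>2 + (4 * \<mu> * Lf\<^sup>2 / \<alpha>) * cx k"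
      using al by (simp add: field_simps power2_eq_square)
    moreover have "(4 * \<mu> * Lf\<^sup>2 / \<alpha>) * cx k \<le> (1 / (8 * \<mu>)) * cx k" using cLf nn(3)[of k] by (rule mult_right_mono)
    moreover have "cx k / (4 * \<mu>) = 2 * ((1 / (8 * \<mu>)) * cx k)" "cx k / (8 * \<mu>) = (1 / (8 * \<mu>)) * cx k" by simp_all
    ultimately show ?thesis using s1[of k] unfolding \<Phi>_def by linarith
  qed
  have tel: "\<Phi> K + ((\<Sum>k<K. cx k) / (8 * \<mu>) + \<beta> / (2 * \<mu>) * (\<Sum>k<K. pp k)) \<le> \<Phi> 0 + 4 * real K * \<mu> * \<alpha> * \<sigma>\<^sup>2"
  proof (induction K)
    case 0 thus ?case by simp
  next
    case (Suc K)
    have "(\<Sum>k<Suc K. cx k) / (8 * \<mu>) = (\<Sum>k<K. cx k) / (8 * \<mu>) + cx K / (8 * \<mu>)" by (simp add: add_divide_distrib)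
    moreover have "\<beta> / (2 * \<mu>) * (\<Sum>k<Suc K. pp k) = \<beta> / (2 * \<mu>) * (\<Sum>k<K. pp k) + \<beta> / (2 * \<mu>) * pp K" by (simp add: distrib_left)
    moreover have "4 * real (Suc K) * \<mu> * \<alpha> * \<sigma>\<^sup>2 = 4 * real K * \<mu> * \<alpha> * \<sigma>\<^sup>2 + 4 * \<mu> * \<alpha> * \<sigma>\<^sup>2" by (simp add: algebra_simps)
    ultimately show ?case using Suc step[of K] by linarith
  qed
  have "\<Phi> K \<ge> 0" unfolding \<Phi>_def using nn(1,2) mu al by simp
  with tel show "(\<Sum>k<K. cx k) / (8 * \<mu>) + \<beta> / (2 * \<mu>) * (\<Sum>k<K. pp k) \<le> v 0 + (2 * \<mu> / \<alpha>) * ep 0 + 4 * real K * \<mu> * \<alpha> * \<sigma>\<^sup>2"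
    unfolding \<Phi>_def by linarith
  have tel2: "ep K + \<alpha> * (\<Sum>k<K. ep k) \<le> ep 0 + 2 * real K * \<alpha>\<^sup>2 * \<sigma>\<^sup>2 + 2 * Lf\<^sup>2 * (\<Sum>k<K. cx k)"
  proof (induction K)
    case 0 thus ?case by simp
  next
    case (Suc K)
    have "2 * real (Suc K) * \<alpha>\<^sup>2 * \<sigma>\<^sup>2 = 2 * real K * \<alpha>\<^sup>2 * \<sigma>\<^sup>2 + 2 * \<alpha>\<^sup>2 * \<sigma>\<^sup>2" by (simp add: algebra_simps)
    thus ?case using Suc s2[of K] by (simp add: distrib_left)
  qed
  thus "\<alpha> * (\<Sum>k<K. ep k) \<le> ep 0 + 2 * real K * \<alpha>\<^sup>2 * \<sigma>\<^sup>2 + 2 * Lf\<^sup>2 * (\<Sum>k<K. cx k)" using nn(2)[of K] by linarith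
qed

context alg begin

abbreviation "\<Omega> \<equiv> PiM UNIV (\<lambda>_::nat. Xi)"

lemma gradf_cont: "continuous_on UNIV gradf"
  by (rule lipschitz_on_continuous_on[of Lf]) (auto simp: lipschitz_on_def dist_norm f_smooth Lf_nonneg)

lemma gp_cont: "continuous_on UNIV (grad_pen c c')"
  by (rule lipschitz_on_continuous_on[of "G\<^sup>2 + C * Lc"])
     (auto simp: lipschitz_on_def dist_norm gp_lip C_nonneg Lc_nonneg)

lemma ph_meas[measurable (raw)]: "F \<in> borel_measurable M \<Longrightarrow> (\<lambda>x. ph (F x)) \<in> borel_measurable M"
  using measurable_compose[OF _ borel_measurable_continuous_onI[OF prox_cont[OF h_pcc mu_pos]]]
  unfolding ph_def by blast
lemma pg_meas[measurable (raw)]: "F \<in> borel_measurable M \<Longrightarrow> (\<lambda>x. pg (F x)) \<in> borel_measurable M"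
  using measurable_compose[OF _ borel_measurable_continuous_onI[OF prox_cont[OF g_pcc mu_pos]]]
  unfolding pg_def by blast
lemma gradf_meas[measurable (raw)]: "F \<in> borel_measurable M \<Longrightarrow> (\<lambda>x. gradf (F x)) \<in> borel_measurable M"
  using measurable_compose[OF _ borel_measurable_continuous_onI[OF gradf_cont]] by blast
lemma gp_meas[measurable (raw)]: "F \<in> borel_measurable M \<Longrightarrow> (\<lambda>x. grad_pen c c' (F x)) \<in> borel_measurable M"
  using measurable_compose[OF _ borel_measurable_continuous_onI[OF gp_cont]] by blast
lemma gQ_meas[measurable (raw)]: assumes [measurable]: "F \<in> borel_measurable M" shows "(\<lambda>x. gQ (F x)) \<in> borel_measurable M"
  unfolding gQ_def by measurable

lemma gf_meas2[measurable (raw)]: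
  assumes "F \<in> borel_measurable M" "T \<in> measurable M Xi"
  shows "(\<lambda>x. gf (F x) (T x)) \<in> borel_measurable M"
proof -
  have "(\<lambda>x. (F x, T x)) \<in> measurable M (borel \<Otimes>\<^sub>M Xi)" using assms by measurable
  from measurable_compose[OF this gf_meas] show ?thesis by simp
qed

lemma gf_meas1: "gf y \<in> borel_measurable Xi"
  using gf_meas2[of "\<lambda>_. y" Xi "\<lambda>x. x"] by simp

lemma st_meas: "(\<lambda>\<omega>. X \<omega> k) \<in> borel_measurable \<Omega> \<and> (\<lambda>\<omega>. Z \<omega> k) \<in> borel_measurable \<Omega> \<and> (\<lambda>\<omega>. Dd \<omega> k) \<in> borel_measurable \<Omega>"
proof (induction k)
  case 0
  show ?case unfolding X_0 Z_0 Dd_0 by measurable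
next
  case (Suc k)
  hence [measurable]: "(\<lambda>\<omega>. X \<omega> k) \<in> borel_measurable \<Omega>" "(\<lambda>\<omega>. Z \<omega> k) \<in> borel_measurable \<Omega>" "(\<lambda>\<omega>. Dd \<omega> k) \<in> borel_measurable \<Omega>"
    by auto
  have [measurable]: "(\<lambda>\<omega>. X \<omega> (Suc k)) \<in> borel_measurable \<Omega>" unfolding X_Suc DD_def by measurable
  show ?case unfolding Z_Suc Dd_Suc by measurable
qed

lemma X_meas[measurable]: "(\<lambda>\<omega>. X \<omega> k) \<in> borel_measurable \<Omega>"
  and Z_meas[measurable]: "(\<lambda>\<omega>. Z \<omega> k) \<in> borel_measurable \<Omega>"
  and Dd_meas[measurable]: "(\<lambda>\<omega>. Dd \<omega> k) \<in> borel_measurable \<Omega>"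
  using st_meas by auto

lemma DD_meas[measurable]: "(\<lambda>\<omega>. DD \<omega> k) \<in> borel_measurable \<Omega>"
  unfolding DD_def by measurable
lemma E_meas[measurable]: "(\<lambda>\<omega>. E \<omega> k) \<in> borel_measurable \<Omega>"
  unfolding E_def by measurable

end

lemma final_arith:
  fixes v0 e0 sx sp se \<mu> \<beta> \<alpha> \<sigma> Lf LQ :: real and K :: nat
  assumes mu: "\<mu> > 0" and be: "0 < \<beta>" "\<beta> \<le> 1" and al: "\<alpha> > 0" "32 * \<mu>\<^sup>2 * Lf\<^sup>2 \<le> \<alpha>"
    and LQ: "LQ \<ge> 0" "\<mu> * LQ \<le> 1/4" and K: "K \<ge> 1"
    and nn: "v0 \<ge> 0" "e0 \<ge> 0" "sx \<ge> 0" "sp \<ge> 0"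
    and T1: "sx / (8 * \<mu>) + \<beta> / (2 * \<mu>) * sp \<le> v0 + (2 * \<mu> / \<alpha>) * e0 + 4 * real K * \<mu> * \<alpha> * \<sigma>\<^sup>2"
    and T2: "\<alpha> * se \<le> e0 + 2 * real K * \<alpha>\<^sup>2 * \<sigma>\<^sup>2 + 2 * Lf\<^sup>2 * sx"
  shows "3 * LQ\<^sup>2 * sx + 3 * se + 3 * sp / \<mu>\<^sup>2 \<le> 6 * v0 / (\<mu> * \<beta>) + (12 / \<beta> + 3) * e0 / \<alpha> + (24 / \<beta> + 6) * real K * \<alpha> * \<sigma>\<^sup>2"
    and "sp \<le> 2 * \<mu> * v0 / \<beta> + 4 * \<mu>\<^sup>2 * e0 / (\<alpha> * \<beta>) + 8 * real K * \<mu>\<^sup>2 * \<alpha> * \<sigma>\<^sup>2 / \<beta>"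
proof -
  define S where "S = v0 + (2 * \<mu> / \<alpha>) * e0 + 4 * real K * \<mu> * \<alpha> * \<sigma>\<^sup>2"
  have LQ2: "3 * LQ\<^sup>2 \<le> 3 / (16 * \<mu>\<^sup>2)"
  proof -
    have "LQ \<le> 1 / (4 * \<mu>)" using LQ mu by (simp add: field_simps)
    hence "LQ\<^sup>2 \<le> (1 / (4 * \<mu>))\<^sup>2" using LQ by (intro power_mono) auto
    thus ?thesis by (simp add: power_divide power_mult_distrib)
  qed
  have se: "3 * se \<le> 3 * e0 / \<alpha> + 6 * real K * \<alpha> * \<sigma>\<^sup>2 + (6 * Lf\<^sup>2 / \<alpha>) * sx"
  proof -
    have "se \<le> (e0 + 2 * real K * \<alpha>\<^sup>2 * \<sigma>\<^sup>2 + 2 * Lf\<^sup>2 * sx) / \<alpha>" using T2 al by (simp add: field_simps)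
    thus ?thesis using al by (simp add: field_simps power2_eq_square)
  qed
  have cLf: "6 * Lf\<^sup>2 / \<alpha> \<le> 3 / (16 * \<mu>\<^sup>2)" using al mu by (simp add: field_simps power2_eq_square)
  have c1: "3 * LQ\<^sup>2 * sx \<le> 3 / (16 * \<mu>\<^sup>2) * sx" using LQ2 nn by (intro mult_right_mono) auto
  have c2: "(6 * Lf\<^sup>2 / \<alpha>) * sx \<le> 3 / (16 * \<mu>\<^sup>2) * sx" using cLf nn by (intro mult_right_mono) auto
  have key: "sx / (8 * \<mu>) + sp / \<mu> \<le> (2 / \<beta>) * S"
  proof -
    have "sx / (8 * \<mu>) \<le> (2 / \<beta>) * (sx / (8 * \<mu>))"
    proof -
      have "1 \<le> 2 / \<beta>" using be by (simp add: field_simps)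
      thus ?thesis using nn mu by (metis mult_1 mult_right_mono divide_nonneg_pos zero_less_mult_iff zero_less_numeral)
    qed
    moreover have "sp / \<mu> = (2 / \<beta>) * (\<beta> / (2 * \<mu>) * sp)" using be mu by (simp add: field_simps)
    moreover have "(2 / \<beta>) * (sx / (8 * \<mu>) + \<beta> / (2 * \<mu>) * sp) \<le> (2 / \<beta>) * S"
      using T1 be unfolding S_def by (intro mult_left_mono) auto
    ultimately show ?thesis by (simp add: distrib_left)
  qed
  have "3 / (16 * \<mu>\<^sup>2) * sx + 3 / (16 * \<mu>\<^sup>2) * sx + 3 * sp / \<mu>\<^sup>2 = (3 / \<mu>) * (sx / (8 * \<mu>) + sp / \<mu>)"
    using mu by (simp add: field_simps power2_eq_square)
  also have "\<dots> \<le> (3 / \<mu>) * ((2 / \<beta>) * S)" using key mu by (intro mult_left_mono) auto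
  also have "\<dots> = 6 * v0 / (\<mu> * \<beta>) + 12 * e0 / (\<alpha> * \<beta>) + 24 * real K * \<alpha> * \<sigma>\<^sup>2 / \<beta>"
    unfolding S_def using mu be al by (simp add: field_simps)
  finally have k2: "3 / (16 * \<mu>\<^sup>2) * sx + 3 / (16 * \<mu>\<^sup>2) * sx + 3 * sp / \<mu>\<^sup>2 \<le> 6 * v0 / (\<mu> * \<beta>) + 12 * e0 / (\<alpha> * \<beta>) + 24 * real K * \<alpha> * \<sigma>\<^sup>2 / \<beta>" .
  have e1: "(12 / \<beta> + 3) * e0 / \<alpha> = 12 * e0 / (\<alpha> * \<beta>) + 3 * e0 / \<alpha>" using be al by (simp add: field_simps)
  have e2: "(24 / \<beta> + 6) * real K * \<alpha> * \<sigma>\<^sup>2 = 24 * real K * \<alpha> * \<sigma>\<^sup>2 / \<beta> + 6 * real K * \<alpha> * \<sigma>\<^sup>2" using be by (simp add: field_simps)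
  show "3 * LQ\<^sup>2 * sx + 3 * se + 3 * sp / \<mu>\<^sup>2 \<le> 6 * v0 / (\<mu> * \<beta>) + (12 / \<beta> + 3) * e0 / \<alpha> + (24 / \<beta> + 6) * real K * \<alpha> * \<sigma>\<^sup>2"
    using c1 c2 se k2 e1 e2 by linarith
  have "\<beta> / (2 * \<mu>) * sp \<le> S" using T1 nn mu unfolding S_def by (smt (verit) divide_nonneg_pos)
  hence "sp \<le> (2 * \<mu> / \<beta>) * S" using be mu by (simp add: field_simps)
  also have "\<dots> = 2 * \<mu> * v0 / \<beta> + 4 * \<mu>\<^sup>2 * e0 / (\<alpha> * \<beta>) + 8 * real K * \<mu>\<^sup>2 * \<alpha> * \<sigma>\<^sup>2 / \<beta>"
    unfolding S_def using be al mu by (simp add: field_simps power2_eq_square)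
  finally show "sp \<le> 2 * \<mu> * v0 / \<beta> + 4 * \<mu>\<^sup>2 * e0 / (\<alpha> * \<beta>) + 8 * real K * \<mu>\<^sup>2 * \<alpha> * \<sigma>\<^sup>2 / \<beta>" .
qed


lemma final_cmp:
  fixes vz ez \<mu> \<beta> \<alpha> \<sigma> Lf \<rho> G :: real and K :: nat
  assumes mu: "\<mu> > 0" and be: "0 < \<beta>" "\<beta> \<le> 1" and al: "\<alpha> > 0" and K: "K \<ge> 1" and rho: "\<rho> > 0"
    and nn: "vz \<ge> 0" "ez \<ge> 0"
  defines "A \<equiv> 1/16 + 1/\<beta>\<^sup>2 + (\<mu>/\<beta>)\<^sup>2 / 3"
      and "B \<equiv> 1/16 + 1/\<beta>\<^sup>2"
  defines "W \<equiv> 6 * vz / (\<mu> * \<beta>) + (12 / \<beta> + 3) * ez / \<alpha> + (24 / \<beta> + 6) * real K * \<alpha> * \<sigma>\<^sup>2"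
      and "SP \<equiv> 2 * \<mu> * vz / \<beta> + 4 * \<mu>\<^sup>2 * ez / (\<alpha> * \<beta>) + 8 * real K * \<mu>\<^sup>2 * \<alpha> * \<sigma>\<^sup>2 / \<beta>"
  defines "R1 \<equiv> (1 / real K) * ((96 + 768 * A) * \<mu> * Lf\<^sup>2 / \<alpha> + 24 * A / \<mu>) * vz
         + (48 * A + 6) / (\<alpha> * real K) * ez + (96 * A + 12) * \<alpha> * \<sigma>\<^sup>2"
      and "R2 \<equiv> 2 / (\<rho>\<^sup>2 * real K) * ((144 + 768 / \<beta>\<^sup>2) * \<mu> * Lf\<^sup>2 / \<alpha> + 24 * B / \<mu>) * vz
         + (12 + 96 * B) / (\<alpha> * \<rho>\<^sup>2 * real K) * ez + (24 + 192 * B) * \<alpha> * \<sigma>\<^sup>2 / \<rho>\<^sup>2 + 18 * G\<^sup>2 / \<rho>\<^sup>2"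
  shows "W / real K \<le> R1" and "SP / real K \<le> R1" and "(2 * (W / real K) + 18 * G\<^sup>2) / \<rho>\<^sup>2 \<le> R2"
proof -
  define t where "t = 1 / \<beta>"
  have t1: "t \<ge> 1" using be by (simp add: t_def field_simps)
  have tt: "t \<le> t\<^sup>2" using t1 by (simp add: power2_eq_square)
  have ib2: "1 / \<beta>\<^sup>2 = t\<^sup>2" by (simp add: t_def power_divide)
  have mb: "(\<mu> / \<beta>)\<^sup>2 = \<mu>\<^sup>2 * t\<^sup>2" by (simp add: t_def power_divide)
  have Kp: "real K > 0" using K by simp
  have Lfa: "(96 + 768 * A) * \<mu> * Lf\<^sup>2 / \<alpha> \<ge> 0" and Lfb: "(144 + 768 / \<beta>\<^sup>2) * \<mu> * Lf\<^sup>2 / \<alpha> \<ge> 0"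
    unfolding A_def using mu al by (auto intro!: divide_nonneg_pos mult_nonneg_nonneg add_nonneg_nonneg)
  have A_ge: "A \<ge> 1/16 + t\<^sup>2" "A \<ge> \<mu>\<^sup>2 * t\<^sup>2 / 3" unfolding A_def ib2 mb by auto
  have B_eq: "B = 1/16 + t\<^sup>2" unfolding B_def ib2 ..
  have w1: "6 * vz / (\<mu> * \<beta>) \<le> ((96 + 768 * A) * \<mu> * Lf\<^sup>2 / \<alpha> + 24 * A / \<mu>) * vz"
  proof -
    have "6 * t \<le> 24 * A" using A_ge(1) tt t1 by linarith
    hence "6 * t / \<mu> \<le> 24 * A / \<mu>" using mu by (simp add: divide_right_mono)
    hence "6 * t / \<mu> \<le> (96 + 768 * A) * \<mu> * Lf\<^sup>2 / \<alpha> + 24 * A / \<mu>" using Lfa by linarith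
    hence "(6 * t / \<mu>) * vz \<le> ((96 + 768 * A) * \<mu> * Lf\<^sup>2 / \<alpha> + 24 * A / \<mu>) * vz" using nn by (intro mult_right_mono) auto
    thus ?thesis by (simp add: t_def ac_simps)
  qed
  have w2: "(12 / \<beta> + 3) * ez / \<alpha> \<le> (48 * A + 6) / \<alpha> * ez"
  proof -
    have "12 * t + 3 \<le> 48 * A + 6" using A_ge(1) tt t1 by linarith
    hence "(12 * t + 3) * ez \<le> (48 * A + 6) * ez" using nn by (intro mult_right_mono) auto
    thus ?thesis using al by (simp add: t_def divide_right_mono)
  qed
  have w3: "(24 / \<beta> + 6) * \<alpha> * \<sigma>\<^sup>2 \<le> (96 * A + 12) * \<alpha> * \<sigma>\<^sup>2"
  proof -
    have "24 * t + 6 \<le> 96 * A + 12" using A_ge(1) tt t1 by linarith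
    thus ?thesis using al by (simp add: t_def mult_right_mono)
  qed
  have "W / real K = 6 * vz / (\<mu> * \<beta>) / real K + (12 / \<beta> + 3) * ez / \<alpha> / real K + (24 / \<beta> + 6) * \<alpha> * \<sigma>\<^sup>2"
    unfolding W_def using Kp al be mu by (simp add: field_simps)
  also have "\<dots> \<le> ((96 + 768 * A) * \<mu> * Lf\<^sup>2 / \<alpha> + 24 * A / \<mu>) * vz / real K + (48 * A + 6) / \<alpha> * ez / real K + (96 * A + 12) * \<alpha> * \<sigma>\<^sup>2"
    using w1 w2 w3 Kp by (intro add_mono divide_right_mono) auto
  also have "\<dots> = R1" unfolding R1_def using al Kp be by (simp add: field_simps)
  finally show "W / real K \<le> R1" .
  have p1: "2 * \<mu> * vz / \<beta> \<le> ((96 + 768 * A) * \<mu> * Lf\<^sup>2 / \<alpha> + 24 * A / \<mu>) * vz"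
  proof -
    have "2 * \<mu> * t \<le> 24 * A / \<mu>"
    proof -
      have h4: "2 * t \<le> 8 * t\<^sup>2" using tt t1 by linarith
      have "2 * \<mu> * t * \<mu> = \<mu>\<^sup>2 * (2 * t)" by (simp add: power2_eq_square)
      also have "\<dots> \<le> \<mu>\<^sup>2 * (8 * t\<^sup>2)" using h4 by (intro mult_left_mono) auto
      finally have "2 * \<mu> * t * \<mu> \<le> 8 * \<mu>\<^sup>2 * t\<^sup>2" by simp
      also have "\<dots> = 8 * (\<mu>\<^sup>2 * t\<^sup>2)" by simp
      also have "\<dots> \<le> 24 * A" using A_ge(2) by linarith
      finally show ?thesis using mu by (simp add: field_simps)
    qed
    hence "2 * \<mu> * t \<le> (96 + 768 * A) * \<mu> * Lf\<^sup>2 / \<alpha> + 24 * A / \<mu>" using Lfa by linarith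
    hence "(2 * \<mu> * t) * vz \<le> ((96 + 768 * A) * \<mu> * Lf\<^sup>2 / \<alpha> + 24 * A / \<mu>) * vz" using nn by (intro mult_right_mono) auto
    thus ?thesis by (simp add: t_def)
  qed
  have p2: "4 * \<mu>\<^sup>2 * ez / (\<alpha> * \<beta>) \<le> (48 * A + 6) / \<alpha> * ez"
  proof -
    have "4 * \<mu>\<^sup>2 * t \<le> 48 * A + 6"
    proof -
      have "4 * \<mu>\<^sup>2 * t \<le> 4 * \<mu>\<^sup>2 * t\<^sup>2" using tt by (simp add: mult_left_mono)
      moreover have "4 * \<mu>\<^sup>2 * t\<^sup>2 = 4 * (\<mu>\<^sup>2 * t\<^sup>2)" by simp
      ultimately show ?thesis using A_ge tt t1 by linarith
    qed
    hence "(4 * \<mu>\<^sup>2 * t) * ez \<le> (48 * A + 6) * ez" using nn by (intro mult_right_mono) auto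
    thus ?thesis using al by (simp add: t_def divide_right_mono field_simps)
  qed
  have p3: "8 * \<mu>\<^sup>2 * \<alpha> * \<sigma>\<^sup>2 / \<beta> \<le> (96 * A + 12) * \<alpha> * \<sigma>\<^sup>2"
  proof -
    have "8 * \<mu>\<^sup>2 * t \<le> 96 * A + 12"
    proof -
      have "8 * \<mu>\<^sup>2 * t \<le> 8 * \<mu>\<^sup>2 * t\<^sup>2" using tt by (simp add: mult_left_mono)
      moreover have "8 * \<mu>\<^sup>2 * t\<^sup>2 = 8 * (\<mu>\<^sup>2 * t\<^sup>2)" by simp
      ultimately show ?thesis using A_ge tt t1 by linarith
    qed
    hence "(8 * \<mu>\<^sup>2 * t) * (\<alpha> * \<sigma>\<^sup>2) \<le> (96 * A + 12) * (\<alpha> * \<sigma>\<^sup>2)" using al by (intro mult_right_mono) auto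
    thus ?thesis by (simp add: t_def field_simps)
  qed
  have "SP / real K = 2 * \<mu> * vz / \<beta> / real K + 4 * \<mu>\<^sup>2 * ez / (\<alpha> * \<beta>) / real K + 8 * \<mu>\<^sup>2 * \<alpha> * \<sigma>\<^sup>2 / \<beta>"
    unfolding SP_def using Kp al be mu by (simp add: field_simps)
  also have "\<dots> \<le> ((96 + 768 * A) * \<mu> * Lf\<^sup>2 / \<alpha> + 24 * A / \<mu>) * vz / real K + (48 * A + 6) / \<alpha> * ez / real K + (96 * A + 12) * \<alpha> * \<sigma>\<^sup>2"
    using p1 p2 p3 Kp by (intro add_mono divide_right_mono) auto
  also have "\<dots> = R1" unfolding R1_def using al Kp be by (simp add: field_simps)
  finally show "SP / real K \<le> R1" .
  have q1: "6 * vz / (\<mu> * \<beta>) \<le> ((144 + 768 / \<beta>\<^sup>2) * \<mu> * Lf\<^sup>2 / \<alpha> + 24 * B / \<mu>) * vz"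
  proof -
    have "6 * t \<le> 24 * B" using B_eq tt t1 by linarith
    hence "6 * t / \<mu> \<le> 24 * B / \<mu>" using mu by (simp add: divide_right_mono)
    hence "6 * t / \<mu> \<le> (144 + 768 / \<beta>\<^sup>2) * \<mu> * Lf\<^sup>2 / \<alpha> + 24 * B / \<mu>" using Lfb by linarith
    hence "(6 * t / \<mu>) * vz \<le> ((144 + 768 / \<beta>\<^sup>2) * \<mu> * Lf\<^sup>2 / \<alpha> + 24 * B / \<mu>) * vz" using nn by (intro mult_right_mono) auto
    thus ?thesis by (simp add: t_def ac_simps)
  qed
  have q2: "(12 / \<beta> + 3) * ez / \<alpha> \<le> (6 + 48 * B) / \<alpha> * ez"
  proof -
    have "12 * t + 3 \<le> 6 + 48 * B" using B_eq tt t1 by linarith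
    hence "(12 * t + 3) * ez \<le> (6 + 48 * B) * ez" using nn by (intro mult_right_mono) auto
    thus ?thesis using al by (simp add: t_def divide_right_mono)
  qed
  have q3: "(24 / \<beta> + 6) * \<alpha> * \<sigma>\<^sup>2 \<le> (12 + 96 * B) * \<alpha> * \<sigma>\<^sup>2"
  proof -
    have "24 * t + 6 \<le> 12 + 96 * B" using B_eq tt t1 by linarith
    thus ?thesis using al by (simp add: t_def mult_right_mono)
  qed
  have "W / real K \<le> ((144 + 768 / \<beta>\<^sup>2) * \<mu> * Lf\<^sup>2 / \<alpha> + 24 * B / \<mu>) * vz / real K + (6 + 48 * B) / \<alpha> * ez / real K + (12 + 96 * B) * \<alpha> * \<sigma>\<^sup>2"
  proof -
    have "W / real K = 6 * vz / (\<mu> * \<beta>) / real K + (12 / \<beta> + 3) * ez / \<alpha> / real K + (24 / \<beta> + 6) * \<alpha> * \<sigma>\<^sup>2"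
      unfolding W_def using Kp al be mu by (simp add: field_simps)
    also have "\<dots> \<le> ((144 + 768 / \<beta>\<^sup>2) * \<mu> * Lf\<^sup>2 / \<alpha> + 24 * B / \<mu>) * vz / real K + (6 + 48 * B) / \<alpha> * ez / real K + (12 + 96 * B) * \<alpha> * \<sigma>\<^sup>2"
      using q1 q2 q3 Kp by (intro add_mono divide_right_mono) auto
    finally show ?thesis .
  qed
  hence "(2 * (W / real K) + 18 * G\<^sup>2) / \<rho>\<^sup>2 \<le> (2 * (((144 + 768 / \<beta>\<^sup>2) * \<mu> * Lf\<^sup>2 / \<alpha> + 24 * B / \<mu>) * vz / real K + (6 + 48 * B) / \<alpha> * ez / real K + (12 + 96 * B) * \<alpha> * \<sigma>\<^sup>2) + 18 * G\<^sup>2) / \<rho>\<^sup>2"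
    using rho by (intro divide_right_mono) auto
  also have "\<dots> = R2" unfolding R2_def using rho Kp al mu be by (simp add: field_simps)
  finally show "(2 * (W / real K) + 18 * G\<^sup>2) / \<rho>\<^sup>2 \<le> R2" .
qed

lemma pcc_borel:
  fixes \<phi> :: "'a::euclidean_space \<Rightarrow> ereal"
  assumes "proper_closed_convex \<phi>"
  shows "\<phi> \<in> borel_measurable borel"
proof (rule borel_measurableI_le)
  note P = pcc_props[OF assms]
  fix y :: ereal
  show "{x \<in> space borel. \<phi> x \<le> y} \<in> sets borel"
  proof (cases y)
    case (real t)
    have "{x. \<phi> x \<le> y} = (\<lambda>x. (x, t)) -` {(x, t::real). \<phi> x \<le> ereal t}" using real by auto
    moreover have "closed ((\<lambda>x. (x, t)) -` {(x, t::real). \<phi> x \<le> ereal t})"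
      by (rule closed_vimage[OF P(3)]) (intro continuous_intros)
    ultimately show ?thesis by simp
  next
    case PInf thus ?thesis by simp
  next
    case MInf
    hence "{x \<in> space borel. \<phi> x \<le> y} = {}" using P(1) by auto
    thus ?thesis by simp
  qed
qed

locale alg2 = alg +
  fixes \<mu>bar :: real
  assumes Fstar_fin: "(INF y. ereal (f y) + h y - ereal (g y)) > -\<infinity>"
    and h0: "h x0 \<noteq> \<infinity>"
    and mubar: "\<mu> \<le> \<mu>bar"
begin

definition "Fst = (INF y. ereal (f y) + h y - ereal (g y))"
definition "Fs = real_of_ereal Fst"
definition "Ls = Fs - G\<^sup>2 * \<mu>bar / 2"

lemma h_fin_X: "\<bar>h (X \<omega> k)\<bar> \<noteq> \<infinity>"
proof (cases k)
  case 0 thus ?thesis using h0 pcc_props(1)[OF h_pcc, of x0] by (cases "h x0") (auto simp: X_0)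
next
  case (Suc j) thus ?thesis using ph_fin by (simp add: X_Suc)
qed

lemma Fst_fin: "\<bar>Fst\<bar> \<noteq> \<infinity>"
proof -
  define x1 where "x1 = X undefined 1"
  obtain a where a: "h x1 = ereal a" using h_fin_X[of undefined 1] unfolding x1_def by (cases "h (X undefined 1)") auto
  have "Fst \<le> ereal (f x1) + h x1 - ereal (g x1)"
    unfolding Fst_def by (rule INF_lower) simp
  hence "Fst \<noteq> \<infinity>" using a by auto
  thus ?thesis using Fstar_fin unfolding Fst_def by auto
qed

lemma Pot_lb:
  assumes "\<bar>h x\<bar> \<noteq> \<infinity>"
  shows "Fs \<le> Pot x z"
proof -
  obtain a where a: "h x = ereal a" using assms by (cases "h x") auto
  have "Fst \<le> ereal (f x) + h x - ereal (g x)" unfolding Fst_def by (rule INF_lower) simp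
  hence "Fs \<le> f x + a - g x" using Fst_fin a unfolding Fs_def by (cases Fst) auto
  moreover have "moreau \<mu> g z \<le> g x + (norm (x - z))\<^sup>2 / (2 * \<mu>)" by (rule moreau_props(2)[OF g_pcc mu_pos])
  moreover have "\<rho> / 2 * (norm (c x))\<^sup>2 \<ge> 0" using rho_pos by simp
  ultimately show ?thesis unfolding Pot_def using a by simp
qed

lemma Ls_le: "Ls \<le> Fs" unfolding Ls_def using mu_pos mubar by simp

definition "V \<omega> k = Pot (X \<omega> k) (Z \<omega> k) - Ls"
definition "Xd \<omega> k = (norm (X \<omega> (Suc k) - X \<omega> k))\<^sup>2"
definition "Pd \<omega> k = (norm (X \<omega> (Suc k) - pg (Z \<omega> k)))\<^sup>2"
definition "Ek \<omega> k = (norm (E \<omega> k))\<^sup>2"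

lemma V_nonneg: "V \<omega> k \<ge> 0"
  unfolding V_def using Pot_lb[OF h_fin_X] Ls_le by (smt (verit))

lemma f_cont: "continuous_on UNIV f"
  using f_deriv by (meson continuous_at_imp_continuous_on has_derivative_continuous)
lemma c_cont: "continuous_on UNIV c"
  using c_deriv by (meson continuous_at_imp_continuous_on has_derivative_continuous)

lemma f_meas[measurable (raw)]: "F \<in> borel_measurable M \<Longrightarrow> (\<lambda>x. f (F x)) \<in> borel_measurable M"
  using measurable_compose[OF _ borel_measurable_continuous_onI[OF f_cont]] by blast
lemma c_meas[measurable (raw)]: "F \<in> borel_measurable M \<Longrightarrow> (\<lambda>x. c (F x)) \<in> borel_measurable M"
  using measurable_compose[OF _ borel_measurable_continuous_onI[OF c_cont]] by blast
lemma h_meas[measurable (raw)]: "F \<in> borel_measurable M \<Longrightarrow> (\<lambda>x. h (F x)) \<in> borel_measurable M"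
  using measurable_compose[OF _ pcc_borel[OF h_pcc]] by blast
lemma g_meas[measurable (raw)]: "F \<in> borel_measurable M \<Longrightarrow> (\<lambda>x. g (F x)) \<in> borel_measurable M"
proof -
  have "(\<lambda>y. ereal (g y)) \<in> borel_measurable borel" by (rule pcc_borel[OF g_pcc])
  hence "g \<in> borel_measurable borel" by simp
  thus "F \<in> borel_measurable M \<Longrightarrow> (\<lambda>x. g (F x)) \<in> borel_measurable M" using measurable_compose by blast
qed

lemma moreau_meas[measurable (raw)]: assumes [measurable]: "F \<in> borel_measurable M"
  shows "(\<lambda>x. moreau \<mu> g (F x)) \<in> borel_measurable M"
proof -
  have "(\<lambda>x. moreau \<mu> g (F x)) = (\<lambda>x. g (pg (F x)) + (norm (pg (F x) - F x))\<^sup>2 / (2 * \<mu>))"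
    unfolding pg_def using moreau_props(1)[OF g_pcc mu_pos] by simp
  also have "\<dots> \<in> borel_measurable M" by measurable
  finally show ?thesis .
qed

lemma V_meas[measurable]: "(\<lambda>\<omega>. V \<omega> k) \<in> borel_measurable \<Omega>"
  unfolding V_def Pot_def by measurable
lemma Xd_meas[measurable]: "(\<lambda>\<omega>. Xd \<omega> k) \<in> borel_measurable \<Omega>"
  unfolding Xd_def by measurable
lemma Pd_meas[measurable]: "(\<lambda>\<omega>. Pd \<omega> k) \<in> borel_measurable \<Omega>"
  unfolding Pd_def by measurable
lemma Ek_meas[measurable]: "(\<lambda>\<omega>. Ek \<omega> k) \<in> borel_measurable \<Omega>"
  unfolding Ek_def by measurable

lemma step1: "V \<omega> (Suc k) + Xd \<omega> k / (4 * \<mu>) + \<beta> / (2 * \<mu>) * Pd \<omega> k \<le> V \<omega> k + 2 * \<mu> * Ek \<omega> k"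
proof -
  obtain a where a: "h (X \<omega> k) = ereal a" using h_fin_X[of \<omega> k] by (cases "h (X \<omega> k)") auto
  from one_step[OF a, of "Z \<omega> k" "DD \<omega> k"]
  show ?thesis unfolding V_def Xd_def Pd_def Ek_def E_def
    by (simp add: X_Suc[symmetric] Z_Suc[symmetric])
qed


lemma alpha_pos: "\<alpha> > 0" using alpha_lb by linarith

lemma step2: "(\<integral>\<^sup>+\<omega>. ennreal (Ek \<omega> (Suc k)) \<partial>\<Omega>)
    \<le> (\<integral>\<^sup>+\<omega>. ennreal ((1 - \<alpha>)\<^sup>2 * Ek \<omega> k + 2 * \<alpha>\<^sup>2 * \<sigma>\<^sup>2 + 2 * Lf\<^sup>2 * Xd \<omega> k) \<partial>\<Omega>)"
proof -
  define GG where "GG p = ennreal ((norm ((1 - \<alpha>) *\<^sub>R E (fst p) k + Nf (X (fst p) k) (X (fst p) (Suc k)) (snd p)))\<^sup>2)" for p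
  have Gm: "GG \<in> borel_measurable (\<Omega> \<Otimes>\<^sub>M Xi)" unfolding GG_def Nf_def by measurable
  have dep: "GG (\<omega>, \<xi>) = GG (\<omega>', \<xi>)" if "\<And>j. j < b0 + k \<Longrightarrow> \<omega> j = \<omega>' j" for \<omega> \<omega>' \<xi>
    unfolding GG_def using E_dep[OF that] X_dep[OF that] X_Suc_dep[OF that] by simp
  have "(\<integral>\<^sup>+\<omega>. ennreal (Ek \<omega> (Suc k)) \<partial>\<Omega>) = (\<integral>\<^sup>+\<omega>. GG (\<omega>, \<omega> (b0 + k)) \<partial>\<Omega>)"
    unfolding Ek_def GG_def E_Suc by simp
  also have "\<dots> = (\<integral>\<^sup>+\<omega>. (\<integral>\<^sup>+\<xi>. GG (\<omega>, \<xi>) \<partial>Xi) \<partial>\<Omega>)"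
    by (rule PiM_split_coord[OF prob Gm dep])
  also have "\<dots> \<le> (\<integral>\<^sup>+\<omega>. ennreal ((1 - \<alpha>)\<^sup>2 * Ek \<omega> k + 2 * \<alpha>\<^sup>2 * \<sigma>\<^sup>2 + 2 * Lf\<^sup>2 * Xd \<omega> k) \<partial>\<Omega>)"
  proof (rule nn_integral_mono)
    fix \<omega>
    have "(\<integral>\<^sup>+\<xi>. GG (\<omega>, \<xi>) \<partial>Xi) \<le> ennreal ((norm ((1 - \<alpha>) *\<^sub>R E \<omega> k))\<^sup>2 + 2 * \<alpha>\<^sup>2 * \<sigma>\<^sup>2 + 2 * Lf\<^sup>2 * (norm (X \<omega> (Suc k) - X \<omega> k))\<^sup>2)"
      unfolding GG_def Nf_def fst_conv snd_conv
      by (rule noise_bound[OF prob gf_meas1 A2_unbiased A2_var A4_lip]) (use alpha_pos alpha_ub in auto)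
    also have "(norm ((1 - \<alpha>) *\<^sub>R E \<omega> k))\<^sup>2 = (1 - \<alpha>)\<^sup>2 * Ek \<omega> k"
      unfolding Ek_def by (simp add: power_mult_distrib)
    finally show "(\<integral>\<^sup>+\<xi>. GG (\<omega>, \<xi>) \<partial>Xi) \<le> ennreal ((1 - \<alpha>)\<^sup>2 * Ek \<omega> k + 2 * \<alpha>\<^sup>2 * \<sigma>\<^sup>2 + 2 * Lf\<^sup>2 * Xd \<omega> k)"
      unfolding Xd_def .
  qed
  finally show ?thesis .
qed

end

context alg2 begin

lemma PS: "prob_space \<Omega>"
proof -
  interpret S: sequence_space Xi by (rule seq_space_intro[OF prob])
  show ?thesis by (rule S.P.prob_space_axioms)
qed

lemma int_bound:
  fixes F H :: "(nat \<Rightarrow> 'b) \<Rightarrow> real"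
  assumes "integrable \<Omega> H" "F \<in> borel_measurable \<Omega>" "\<And>\<omega>. 0 \<le> F \<omega>" "\<And>\<omega>. F \<omega> \<le> H \<omega>"
  shows "integrable \<Omega> F"
  by (rule Bochner_Integration.integrable_bound[OF assms(1,2)])
     (use assms(3,4) in \<open>auto intro!: AE_I2 order_trans[OF _ abs_ge_self]\<close>)

lemma Xd_le: "Xd \<omega> k \<le> 4 * \<mu> * (V \<omega> k + 2 * \<mu> * Ek \<omega> k)"
proof -
  have "Xd \<omega> k / (4 * \<mu>) \<le> V \<omega> k + 2 * \<mu> * Ek \<omega> k"
    using step1[of \<omega> k] V_nonneg[of \<omega> "Suc k"] beta mu_pos
    by (smt (verit, best) Pd_def divide_nonneg_pos mult_nonneg_nonneg zero_le_power2)
  thus ?thesis using mu_pos by (simp add: field_simps)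
qed

lemma Pd_le: "Pd \<omega> k \<le> (2 * \<mu> / \<beta>) * (V \<omega> k + 2 * \<mu> * Ek \<omega> k)"
proof -
  have "\<beta> / (2 * \<mu>) * Pd \<omega> k \<le> V \<omega> k + 2 * \<mu> * Ek \<omega> k"
    using step1[of \<omega> k] V_nonneg[of \<omega> "Suc k"] beta mu_pos
    by (smt (verit, best) Xd_def divide_nonneg_pos zero_le_power2)
  thus ?thesis using mu_pos beta by (simp add: field_simps)
qed

lemma V_Suc_le: "V \<omega> (Suc k) \<le> V \<omega> k + 2 * \<mu> * Ek \<omega> k"
  using step1[of \<omega> k] beta mu_pos unfolding Xd_def Pd_def
  by (smt (verit, best) divide_nonneg_pos mult_nonneg_nonneg zero_le_power2)

lemma Ek_nonneg: "Ek \<omega> k \<ge> 0" and Xd_nonneg: "Xd \<omega> k \<ge> 0" and Pd_nonneg: "Pd \<omega> k \<ge> 0"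
  by (simp_all add: Ek_def Xd_def Pd_def)

lemma integ:
  assumes e0: "(\<integral>\<^sup>+\<omega>. ennreal (Ek \<omega> 0) \<partial>\<Omega>) < \<infinity>"
  shows "integrable \<Omega> (\<lambda>\<omega>. V \<omega> k) \<and> integrable \<Omega> (\<lambda>\<omega>. Ek \<omega> k)"
proof (induction k)
  case 0
  interpret prob_space \<Omega> by (rule PS)
  have "(\<lambda>\<omega>. V \<omega> 0) = (\<lambda>\<omega>. Pot x0 x0 - Ls)" by (simp add: V_def X_0 Z_0)
  moreover have "integrable \<Omega> (\<lambda>\<omega>. Ek \<omega> 0)"
    by (rule integrableI_nonneg[OF Ek_meas _ e0]) (simp add: Ek_nonneg)
  ultimately show ?case by simp
next
  case (Suc k)
  interpret prob_space \<Omega> by (rule PS)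
  have IV: "integrable \<Omega> (\<lambda>\<omega>. V \<omega> k)" and IE: "integrable \<Omega> (\<lambda>\<omega>. Ek \<omega> k)" using Suc by auto
  have IH: "integrable \<Omega> (\<lambda>\<omega>. V \<omega> k + 2 * \<mu> * Ek \<omega> k)" using IV IE by auto
  have "integrable \<Omega> (\<lambda>\<omega>. V \<omega> (Suc k))"
    by (rule int_bound[OF IH]) (use V_Suc_le V_nonneg in auto)
  moreover have "integrable \<Omega> (\<lambda>\<omega>. Ek \<omega> (Suc k))"
  proof -
    have IXd: "integrable \<Omega> (\<lambda>\<omega>. Xd \<omega> k)"
      by (rule int_bound[of "\<lambda>\<omega>. 4 * \<mu> * (V \<omega> k + 2 * \<mu> * Ek \<omega> k)"]) (use IH Xd_le Xd_nonneg in auto)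
    define F where "F \<omega> = (1 - \<alpha>)\<^sup>2 * Ek \<omega> k + 2 * \<alpha>\<^sup>2 * \<sigma>\<^sup>2 + 2 * Lf\<^sup>2 * Xd \<omega> k" for \<omega>
    have IF: "integrable \<Omega> F" unfolding F_def using IE IXd by auto
    have "(\<integral>\<^sup>+\<omega>. ennreal (Ek \<omega> (Suc k)) \<partial>\<Omega>) \<le> (\<integral>\<^sup>+\<omega>. ennreal (F \<omega>) \<partial>\<Omega>)"
      unfolding F_def by (rule step2)
    also have "\<dots> = ennreal (\<integral>\<omega>. F \<omega> \<partial>\<Omega>)"
      by (intro nn_integral_eq_integral[OF IF] AE_I2) (simp add: F_def Ek_nonneg Xd_nonneg)
    finally have le: "(\<integral>\<^sup>+\<omega>. ennreal (Ek \<omega> (Suc k)) \<partial>\<Omega>) \<le> ennreal (\<integral>\<omega>. F \<omega> \<partial>\<Omega>)" .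
    have fin: "(\<integral>\<^sup>+\<omega>. ennreal (Ek \<omega> (Suc k)) \<partial>\<Omega>) < \<infinity>"
      using le_less_trans[OF le ennreal_less_top] by simp
    show ?thesis by (rule integrableI_nonneg[OF Ek_meas _ fin]) (simp add: Ek_nonneg)
  qed
  ultimately show ?case by simp
qed


lemma integ_all:
  assumes e0: "(\<integral>\<^sup>+\<omega>. ennreal (Ek \<omega> 0) \<partial>\<Omega>) < \<infinity>"
  shows "integrable \<Omega> (\<lambda>\<omega>. V \<omega> k)" "integrable \<Omega> (\<lambda>\<omega>. Ek \<omega> k)"
    "integrable \<Omega> (\<lambda>\<omega>. Xd \<omega> k)" "integrable \<Omega> (\<lambda>\<omega>. Pd \<omega> k)"
proof -
  show IV: "integrable \<Omega> (\<lambda>\<omega>. V \<omega> k)" and IE: "integrable \<Omega> (\<lambda>\<omega>. Ek \<omega> k)" using integ[OF e0] by auto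
  have IH: "integrable \<Omega> (\<lambda>\<omega>. V \<omega> k + 2 * \<mu> * Ek \<omega> k)" using IV IE by auto
  show "integrable \<Omega> (\<lambda>\<omega>. Xd \<omega> k)"
    by (rule int_bound[of "\<lambda>\<omega>. 4 * \<mu> * (V \<omega> k + 2 * \<mu> * Ek \<omega> k)"]) (use IH Xd_le Xd_nonneg in auto)
  show "integrable \<Omega> (\<lambda>\<omega>. Pd \<omega> k)"
    by (rule int_bound[of "\<lambda>\<omega>. (2 * \<mu> / \<beta>) * (V \<omega> k + 2 * \<mu> * Ek \<omega> k)"]) (use IH Pd_le Pd_nonneg in auto)
qed

lemma real_step1:
  assumes e0: "(\<integral>\<^sup>+\<omega>. ennreal (Ek \<omega> 0) \<partial>\<Omega>) < \<infinity>"
  shows "(\<integral>\<omega>. V \<omega> (Suc k) \<partial>\<Omega>) + (\<integral>\<omega>. Xd \<omega> k \<partial>\<Omega>) / (4 * \<mu>) + \<beta> / (2 * \<mu>) * (\<integral>\<omega>. Pd \<omega> k \<partial>\<Omega>)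
     \<le> (\<integral>\<omega>. V \<omega> k \<partial>\<Omega>) + 2 * \<mu> * (\<integral>\<omega>. Ek \<omega> k \<partial>\<Omega>)"
proof -
  note I = integ_all[OF e0]
  have "(\<integral>\<omega>. V \<omega> (Suc k) + Xd \<omega> k / (4 * \<mu>) + \<beta> / (2 * \<mu>) * Pd \<omega> k \<partial>\<Omega>) \<le> (\<integral>\<omega>. V \<omega> k + 2 * \<mu> * Ek \<omega> k \<partial>\<Omega>)"
    by (rule integral_mono) (use I step1 in auto)
  thus ?thesis using I by simp
qed

lemma real_step2:
  assumes e0: "(\<integral>\<^sup>+\<omega>. ennreal (Ek \<omega> 0) \<partial>\<Omega>) < \<infinity>"
  shows "(\<integral>\<omega>. Ek \<omega> (Suc k) \<partial>\<Omega>) + \<alpha> * (\<integral>\<omega>. Ek \<omega> k \<partial>\<Omega>)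
     \<le> (\<integral>\<omega>. Ek \<omega> k \<partial>\<Omega>) + 2 * \<alpha>\<^sup>2 * \<sigma>\<^sup>2 + 2 * Lf\<^sup>2 * (\<integral>\<omega>. Xd \<omega> k \<partial>\<Omega>)"
proof -
  interpret prob_space \<Omega> by (rule PS)
  note I = integ_all[OF e0]
  define F where "F \<omega> = (1 - \<alpha>)\<^sup>2 * Ek \<omega> k + 2 * \<alpha>\<^sup>2 * \<sigma>\<^sup>2 + 2 * Lf\<^sup>2 * Xd \<omega> k" for \<omega>
  have IF: "integrable \<Omega> F" unfolding F_def using I by auto
  have "ennreal (\<integral>\<omega>. Ek \<omega> (Suc k) \<partial>\<Omega>) = (\<integral>\<^sup>+\<omega>. ennreal (Ek \<omega> (Suc k)) \<partial>\<Omega>)"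
    by (intro nn_integral_eq_integral[symmetric] I AE_I2) (simp add: Ek_nonneg)
  also have "\<dots> \<le> (\<integral>\<^sup>+\<omega>. ennreal (F \<omega>) \<partial>\<Omega>)"
    unfolding F_def by (rule step2)
  also have "\<dots> = ennreal (\<integral>\<omega>. F \<omega> \<partial>\<Omega>)"
    by (intro nn_integral_eq_integral[OF IF] AE_I2) (simp add: F_def Ek_nonneg Xd_nonneg)
  finally have le: "ennreal (\<integral>\<omega>. Ek \<omega> (Suc k) \<partial>\<Omega>) \<le> ennreal (\<integral>\<omega>. F \<omega> \<partial>\<Omega>)" .
  have F0: "(\<integral>\<omega>. F \<omega> \<partial>\<Omega>) \<ge> 0" by (rule integral_nonneg_AE) (simp add: F_def Ek_nonneg Xd_nonneg)
  have "(\<integral>\<omega>. Ek \<omega> (Suc k) \<partial>\<Omega>) \<le> (\<integral>\<omega>. F \<omega> \<partial>\<Omega>)" using le ennreal_le_iff[OF F0] by blast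
  also have "(\<integral>\<omega>. F \<omega> \<partial>\<Omega>) = (1 - \<alpha>)\<^sup>2 * (\<integral>\<omega>. Ek \<omega> k \<partial>\<Omega>) + 2 * \<alpha>\<^sup>2 * \<sigma>\<^sup>2 + 2 * Lf\<^sup>2 * (\<integral>\<omega>. Xd \<omega> k \<partial>\<Omega>)"
    unfolding F_def using I by (simp add: prob_space)
  finally have a: "(\<integral>\<omega>. Ek \<omega> (Suc k) \<partial>\<Omega>) \<le> (1 - \<alpha>)\<^sup>2 * (\<integral>\<omega>. Ek \<omega> k \<partial>\<Omega>) + 2 * \<alpha>\<^sup>2 * \<sigma>\<^sup>2 + 2 * Lf\<^sup>2 * (\<integral>\<omega>. Xd \<omega> k \<partial>\<Omega>)" .
  have e0n: "(\<integral>\<omega>. Ek \<omega> k \<partial>\<Omega>) \<ge> 0" by (rule integral_nonneg_AE) (simp add: Ek_nonneg)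
  have "(1 - \<alpha>)\<^sup>2 + \<alpha> \<le> 1" using alpha_pos alpha_ub by (simp add: power2_eq_square algebra_simps mult_le_cancel_left1)
  hence "((1 - \<alpha>)\<^sup>2 + \<alpha>) * (\<integral>\<omega>. Ek \<omega> k \<partial>\<Omega>) \<le> 1 * (\<integral>\<omega>. Ek \<omega> k \<partial>\<Omega>)" using e0n by (rule mult_right_mono)
  thus ?thesis using a by (simp add: distrib_right)
qed


definition "U \<omega> k = (norm (gQ (X \<omega> (Suc k)) - DD \<omega> k + (1 / \<mu>) *\<^sub>R (pg (Z \<omega> k) - X \<omega> (Suc k))))\<^sup>2"
definition "Pen \<omega> k = (norm (grad_pen c c' (X \<omega> (Suc k))))\<^sup>2"

lemma U_le: "U \<omega> k \<le> 3 * (LQ\<^sup>2 * Xd \<omega> k + Ek \<omega> k + Pd \<omega> k / \<mu>\<^sup>2)"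
  using u_bound[of "Z \<omega> k" "DD \<omega> k" "X \<omega> k"] unfolding U_def Xd_def Ek_def Pd_def E_def
  by (simp add: X_Suc)

lemma Pen_le: "Pen \<omega> k \<le> (2 * U \<omega> k + 18 * G\<^sup>2) / \<rho>\<^sup>2"
proof -
  have "\<rho>\<^sup>2 * Pen \<omega> k \<le> 2 * U \<omega> k + 18 * G\<^sup>2"
    using pen_bound[of "Z \<omega> k" "DD \<omega> k"] unfolding U_def Pen_def by (simp add: X_Suc)
  thus ?thesis using rho_pos by (simp add: field_simps)
qed

lemma nn_le_int:
  assumes "integrable \<Omega> H" "\<And>\<omega>. F \<omega> \<le> H \<omega>" "\<And>\<omega>. 0 \<le> H \<omega>"
  shows "(\<integral>\<^sup>+\<omega>. ennreal (F \<omega>) \<partial>\<Omega>) \<le> ennreal (\<integral>\<omega>. H \<omega> \<partial>\<Omega>)"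
proof -
  have "(\<integral>\<^sup>+\<omega>. ennreal (F \<omega>) \<partial>\<Omega>) \<le> (\<integral>\<^sup>+\<omega>. ennreal (H \<omega>) \<partial>\<Omega>)"
    by (rule nn_integral_mono) (use assms(2) in \<open>simp add: ennreal_leI\<close>)
  also have "\<dots> = ennreal (\<integral>\<omega>. H \<omega> \<partial>\<Omega>)"
    by (intro nn_integral_eq_integral assms(1) AE_I2 assms(3))
  finally show ?thesis .
qed

lemma main_bounds:
  assumes e0: "(\<integral>\<^sup>+\<omega>. ennreal (Ek \<omega> 0) \<partial>\<Omega>) < \<infinity>" and K: "K \<ge> 1"
  defines "v0 \<equiv> Pot x0 x0 - Ls" and "ee \<equiv> (\<integral>\<omega>. Ek \<omega> 0 \<partial>\<Omega>)"
  defines "W \<equiv> 6 * v0 / (\<mu> * \<beta>) + (12 / \<beta> + 3) * ee / \<alpha> + (24 / \<beta> + 6) * real K * \<alpha> * \<sigma>\<^sup>2"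
  shows "(\<Sum>k<K. \<integral>\<^sup>+\<omega>. ennreal (U \<omega> k) \<partial>\<Omega>) \<le> ennreal W"
    and "(\<Sum>k<K. \<integral>\<^sup>+\<omega>. ennreal (Pd \<omega> k) \<partial>\<Omega>) \<le> ennreal (2 * \<mu> * v0 / \<beta> + 4 * \<mu>\<^sup>2 * ee / (\<alpha> * \<beta>) + 8 * real K * \<mu>\<^sup>2 * \<alpha> * \<sigma>\<^sup>2 / \<beta>)"
    and "(\<Sum>k<K. \<integral>\<^sup>+\<omega>. ennreal (Pen \<omega> k) \<partial>\<Omega>) \<le> ennreal ((2 * W + 18 * real K * G\<^sup>2) / \<rho>\<^sup>2)"
    and "v0 \<ge> 0" and "ee \<ge> 0"
proof -
  interpret prob_space \<Omega> by (rule PS)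
  note I = integ_all[OF e0]
  define v where "v k = (\<integral>\<omega>. V \<omega> k \<partial>\<Omega>)" for k
  define ep where "ep k = (\<integral>\<omega>. Ek \<omega> k \<partial>\<Omega>)" for k
  define cx where "cx k = (\<integral>\<omega>. Xd \<omega> k \<partial>\<Omega>)" for k
  define pp where "pp k = (\<integral>\<omega>. Pd \<omega> k \<partial>\<Omega>)" for k
  have nn: "v k \<ge> 0" "ep k \<ge> 0" "cx k \<ge> 0" "pp k \<ge> 0" for k
    unfolding v_def ep_def cx_def pp_def
    by (auto intro!: integral_nonneg_AE AE_I2 simp: V_nonneg Ek_nonneg Xd_nonneg Pd_nonneg)
  have v0: "v 0 = v0" unfolding v_def v0_def by (simp add: V_def X_0 Z_0 prob_space)
  show "v0 \<ge> 0" using nn(1)[of 0] v0 by simp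
  show "ee \<ge> 0" using nn(2)[of 0] unfolding ee_def ep_def by simp
  note TT = telescope[of v ep cx pp \<mu> \<beta> \<alpha> \<sigma> Lf K, OF nn real_step1[OF e0, folded v_def cx_def pp_def ep_def]
      real_step2[OF e0, folded cx_def ep_def] mu_pos alpha_pos alpha_lb(2)]
  note FA = final_arith[of \<mu> \<beta> \<alpha> Lf LQ K v0 ee "\<Sum>k<K. cx k" "\<Sum>k<K. pp k" \<sigma> "\<Sum>k<K. ep k",
      OF mu_pos beta alpha_pos alpha_lb(2) LQ_nonneg muLQ K]
  have sums_nn: "v0 \<ge> 0" "ee \<ge> 0" "(\<Sum>k<K. cx k) \<ge> 0" "(\<Sum>k<K. pp k) \<ge> 0"
    using nn(1)[of 0] v0 nn(2)[of 0] unfolding ee_def ep_def by (auto intro: sum_nonneg nn)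
  have T1: "(\<Sum>k<K. cx k) / (8 * \<mu>) + \<beta> / (2 * \<mu>) * (\<Sum>k<K. pp k) \<le> v0 + 2 * \<mu> / \<alpha> * ee + 4 * real K * \<mu> * \<alpha> * \<sigma>\<^sup>2"
    using TT(1) v0 unfolding ee_def ep_def by simp
  have T2: "\<alpha> * (\<Sum>k<K. ep k) \<le> ee + 2 * real K * \<alpha>\<^sup>2 * \<sigma>\<^sup>2 + 2 * Lf\<^sup>2 * (\<Sum>k<K. cx k)"
    using TT(2) unfolding ee_def ep_def by simp
  note FA' = FA[OF sums_nn T1 T2]
  have Uk: "(\<integral>\<^sup>+\<omega>. ennreal (U \<omega> k) \<partial>\<Omega>) \<le> ennreal (3 * (LQ\<^sup>2 * cx k + ep k + pp k / \<mu>\<^sup>2))" for k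
  proof -
    have "(\<integral>\<^sup>+\<omega>. ennreal (U \<omega> k) \<partial>\<Omega>) \<le> ennreal (\<integral>\<omega>. 3 * (LQ\<^sup>2 * Xd \<omega> k + Ek \<omega> k + Pd \<omega> k / \<mu>\<^sup>2) \<partial>\<Omega>)"
      by (rule nn_le_int) (use I U_le in \<open>auto simp: Xd_nonneg Ek_nonneg Pd_nonneg\<close>)
    also have "(\<integral>\<omega>. 3 * (LQ\<^sup>2 * Xd \<omega> k + Ek \<omega> k + Pd \<omega> k / \<mu>\<^sup>2) \<partial>\<Omega>) = 3 * (LQ\<^sup>2 * cx k + ep k + pp k / \<mu>\<^sup>2)"
      unfolding cx_def ep_def pp_def using I by simp
    finally show ?thesis .
  qed
  have SU: "(\<Sum>k<K. 3 * (LQ\<^sup>2 * cx k + ep k + pp k / \<mu>\<^sup>2)) = 3 * LQ\<^sup>2 * (\<Sum>k<K. cx k) + 3 * (\<Sum>k<K. ep k) + 3 * (\<Sum>k<K. pp k) / \<mu>\<^sup>2"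
    by (simp add: sum.distrib sum_distrib_left sum_distrib_right sum_divide_distrib algebra_simps)
  have SUW: "(\<Sum>k<K. 3 * (LQ\<^sup>2 * cx k + ep k + pp k / \<mu>\<^sup>2)) \<le> W"
    unfolding SU W_def using FA'(1) by simp
  have nn3: "0 \<le> 3 * (LQ\<^sup>2 * cx k + ep k + pp k / \<mu>\<^sup>2)" for k using nn by simp
  have "(\<Sum>k<K. \<integral>\<^sup>+\<omega>. ennreal (U \<omega> k) \<partial>\<Omega>) \<le> (\<Sum>k<K. ennreal (3 * (LQ\<^sup>2 * cx k + ep k + pp k / \<mu>\<^sup>2)))"
    by (rule sum_mono) (rule Uk)
  also have "\<dots> = ennreal (\<Sum>k<K. 3 * (LQ\<^sup>2 * cx k + ep k + pp k / \<mu>\<^sup>2))"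
    using nn3 by (simp add: sum_ennreal)
  also have "\<dots> \<le> ennreal W" using SUW by (rule ennreal_leI)
  finally show "(\<Sum>k<K. \<integral>\<^sup>+\<omega>. ennreal (U \<omega> k) \<partial>\<Omega>) \<le> ennreal W" .
  have Pk: "(\<integral>\<^sup>+\<omega>. ennreal (Pd \<omega> k) \<partial>\<Omega>) = ennreal (pp k)" for k
    unfolding pp_def by (intro nn_integral_eq_integral I AE_I2) (simp add: Pd_nonneg)
  have "(\<Sum>k<K. \<integral>\<^sup>+\<omega>. ennreal (Pd \<omega> k) \<partial>\<Omega>) = ennreal (\<Sum>k<K. pp k)"
    unfolding Pk using nn by (simp add: sum_ennreal)
  also have "\<dots> \<le> ennreal (2 * \<mu> * v0 / \<beta> + 4 * \<mu>\<^sup>2 * ee / (\<alpha> * \<beta>) + 8 * real K * \<mu>\<^sup>2 * \<alpha> * \<sigma>\<^sup>2 / \<beta>)"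
    using FA'(2) by (rule ennreal_leI)
  finally show "(\<Sum>k<K. \<integral>\<^sup>+\<omega>. ennreal (Pd \<omega> k) \<partial>\<Omega>) \<le> ennreal (2 * \<mu> * v0 / \<beta> + 4 * \<mu>\<^sup>2 * ee / (\<alpha> * \<beta>) + 8 * real K * \<mu>\<^sup>2 * \<alpha> * \<sigma>\<^sup>2 / \<beta>)" .
  have Penk: "(\<integral>\<^sup>+\<omega>. ennreal (Pen \<omega> k) \<partial>\<Omega>) \<le> ennreal ((2 * (3 * (LQ\<^sup>2 * cx k + ep k + pp k / \<mu>\<^sup>2)) + 18 * G\<^sup>2) / \<rho>\<^sup>2)" for k
  proof -
    have pw: "Pen \<omega> k \<le> (2 * (3 * (LQ\<^sup>2 * Xd \<omega> k + Ek \<omega> k + Pd \<omega> k / \<mu>\<^sup>2)) + 18 * G\<^sup>2) / \<rho>\<^sup>2" for \<omega>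
    proof -
      have "2 * U \<omega> k + 18 * G\<^sup>2 \<le> 2 * (3 * (LQ\<^sup>2 * Xd \<omega> k + Ek \<omega> k + Pd \<omega> k / \<mu>\<^sup>2)) + 18 * G\<^sup>2"
        using U_le[of \<omega> k] by simp
      hence "(2 * U \<omega> k + 18 * G\<^sup>2) / \<rho>\<^sup>2 \<le> (2 * (3 * (LQ\<^sup>2 * Xd \<omega> k + Ek \<omega> k + Pd \<omega> k / \<mu>\<^sup>2)) + 18 * G\<^sup>2) / \<rho>\<^sup>2"
        by (rule divide_right_mono) simp
      thus ?thesis using Pen_le[of \<omega> k] by linarith
    qed
    have "(\<integral>\<^sup>+\<omega>. ennreal (Pen \<omega> k) \<partial>\<Omega>) \<le> ennreal (\<integral>\<omega>. (2 * (3 * (LQ\<^sup>2 * Xd \<omega> k + Ek \<omega> k + Pd \<omega> k / \<mu>\<^sup>2)) + 18 * G\<^sup>2) / \<rho>\<^sup>2 \<partial>\<Omega>)"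
      by (rule nn_le_int) (use I pw in \<open>auto simp: Xd_nonneg Ek_nonneg Pd_nonneg\<close>)
    also have "(\<integral>\<omega>. (2 * (3 * (LQ\<^sup>2 * Xd \<omega> k + Ek \<omega> k + Pd \<omega> k / \<mu>\<^sup>2)) + 18 * G\<^sup>2) / \<rho>\<^sup>2 \<partial>\<Omega>)
        = (2 * (3 * (LQ\<^sup>2 * cx k + ep k + pp k / \<mu>\<^sup>2)) + 18 * G\<^sup>2) / \<rho>\<^sup>2"
      unfolding cx_def ep_def pp_def using I by (simp add: prob_space)
    finally show ?thesis .
  qed
  have nn4: "0 \<le> (2 * (3 * (LQ\<^sup>2 * cx k + ep k + pp k / \<mu>\<^sup>2)) + 18 * G\<^sup>2) / \<rho>\<^sup>2" for k using nn by simp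
  have "(\<Sum>k<K. \<integral>\<^sup>+\<omega>. ennreal (Pen \<omega> k) \<partial>\<Omega>) \<le> (\<Sum>k<K. ennreal ((2 * (3 * (LQ\<^sup>2 * cx k + ep k + pp k / \<mu>\<^sup>2)) + 18 * G\<^sup>2) / \<rho>\<^sup>2))"
    by (rule sum_mono) (rule Penk)
  also have "\<dots> = ennreal (\<Sum>k<K. (2 * (3 * (LQ\<^sup>2 * cx k + ep k + pp k / \<mu>\<^sup>2)) + 18 * G\<^sup>2) / \<rho>\<^sup>2)"
    using nn4 by (simp add: sum_ennreal)
  also have "(\<Sum>k<K. (2 * (3 * (LQ\<^sup>2 * cx k + ep k + pp k / \<mu>\<^sup>2)) + 18 * G\<^sup>2) / \<rho>\<^sup>2)
      = (2 * (\<Sum>k<K. 3 * (LQ\<^sup>2 * cx k + ep k + pp k / \<mu>\<^sup>2)) + 18 * real K * G\<^sup>2) / \<rho>\<^sup>2"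
    by (simp add: sum_divide_distrib[symmetric] sum.distrib sum_distrib_left)
  also have "\<dots> \<le> (2 * W + 18 * real K * G\<^sup>2) / \<rho>\<^sup>2"
    using SUW by (intro divide_right_mono) auto
  finally show "(\<Sum>k<K. \<integral>\<^sup>+\<omega>. ennreal (Pen \<omega> k) \<partial>\<Omega>) \<le> ennreal ((2 * W + 18 * real K * G\<^sup>2) / \<rho>\<^sup>2)"
    by (simp add: ennreal_leI)
qed

end

lemma pair_uniform_sum:
  fixes F :: "nat \<Rightarrow> 'w \<Rightarrow> ennreal" and M :: "'w measure"
  assumes Fm: "\<And>r. F r \<in> borel_measurable M" and K: "K \<ge> 1"
  shows "(\<integral>\<^sup>+p. F (snd p) (fst p) \<partial>(M \<Otimes>\<^sub>M uniform_count_measure {..<K}))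
       = ennreal (1 / real K) * (\<Sum>r<K. \<integral>\<^sup>+\<omega>. F r \<omega> \<partial>M)"
proof -
  let ?U = "uniform_count_measure {..<K::nat}"
  have "0 \<in> {..<K}" using K by simp
  hence PU: "prob_space ?U" by (intro prob_space_uniform_count_measure) auto
  interpret U: prob_space ?U by (rule PU)
  have sn: "snd \<in> measurable (M \<Otimes>\<^sub>M ?U) (count_space {..<K})"
    using measurable_snd[of M ?U] by (simp cong: measurable_cong_sets add: sets_uniform_count_measure_count_space)
  have meas: "(\<lambda>p. F (snd p) (fst p)) \<in> borel_measurable (M \<Otimes>\<^sub>M ?U)"
    by (rule measurable_compose_countable'[OF _ sn]) (use Fm in auto)
  have "(\<integral>\<^sup>+p. F (snd p) (fst p) \<partial>(M \<Otimes>\<^sub>M ?U)) = (\<integral>\<^sup>+\<omega>. (\<integral>\<^sup>+r. F r \<omega> \<partial>?U) \<partial>M)"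
    using U.nn_integral_fst[OF meas] by simp
  also have "\<dots> = (\<integral>\<^sup>+\<omega>. (\<Sum>r<K. ennreal (1 / real K) * F r \<omega>) \<partial>M)"
  proof (rule nn_integral_cong)
    fix \<omega>
    have "(\<integral>\<^sup>+r. F r \<omega> \<partial>?U) = (\<Sum>r<K. ennreal (1 / real (card {..<K})) * F r \<omega>)"
      unfolding uniform_count_measure_def by (rule nn_integral_point_measure_finite) simp
    thus "(\<integral>\<^sup>+r. F r \<omega> \<partial>?U) = (\<Sum>r<K. ennreal (1 / real K) * F r \<omega>)" by simp
  qed
  also have "\<dots> = (\<Sum>r<K. ennreal (1 / real K) * (\<integral>\<^sup>+\<omega>. F r \<omega> \<partial>M))"
    using Fm by (subst nn_integral_sum) (auto simp: nn_integral_cmult)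
  also have "\<dots> = ennreal (1 / real K) * (\<Sum>r<K. \<integral>\<^sup>+\<omega>. F r \<omega> \<partial>M)"
    by (simp add: sum_distrib_left)
  finally show ?thesis .
qed

context alg2 begin
lemma U_meas[measurable]: "(\<lambda>\<omega>. U \<omega> k) \<in> borel_measurable \<Omega>"
  unfolding U_def by measurable
lemma Pen_meas[measurable]: "(\<lambda>\<omega>. Pen \<omega> k) \<in> borel_measurable \<Omega>"
  unfolding Pen_def by measurable
end

theorem lemmaC12:
  fixes f :: "'a::euclidean_space \<Rightarrow> real" and gradf :: "'a \<Rightarrow> 'a"
    and ff :: "'a \<Rightarrow> 'c \<Rightarrow> real" and gf :: "'a \<Rightarrow> 'c \<Rightarrow> 'a" and Xi :: "'c measure"
    and c :: "'a \<Rightarrow> 'b::euclidean_space" and c' :: "'a \<Rightarrow> 'a \<Rightarrow> 'b"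
    and h :: "'a \<Rightarrow> ereal" and g :: "'a \<Rightarrow> real"
    and Lf Lc C G \<sigma> \<rho> \<rho>0 \<mu> \<mu>bar \<alpha> \<beta> :: real and b0 K :: nat and x0 :: 'a
  defines "x \<equiv> (\<lambda>\<omega> k. fst (mossp gf c c' h g \<rho> \<mu> \<alpha> \<beta> b0 x0 \<omega> k))"
      and "z \<equiv> (\<lambda>\<omega> k. fst (snd (mossp gf c c' h g \<rho> \<mu> \<alpha> \<beta> b0 x0 \<omega> k)))"
      and "d \<equiv> (\<lambda>\<omega> k. snd (snd (mossp gf c c' h g \<rho> \<mu> \<alpha> \<beta> b0 x0 \<omega> k)))"
  defines "gradQ \<equiv> (\<lambda>y. gradf y + \<rho> *\<^sub>R grad_pen c c' y)"
      and "D \<equiv> (\<lambda>\<omega> k. d \<omega> k + \<rho> *\<^sub>R grad_pen c c' (x \<omega> k))"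
  defines "e \<equiv> (\<lambda>\<omega> k. D \<omega> k - gradQ (x \<omega> k))"
      and "u \<equiv> (\<lambda>\<omega> k. gradQ (x \<omega> (Suc k)) - D \<omega> k
                     + (1 / \<mu>) *\<^sub>R (prox \<mu> (\<lambda>y. ereal (g y)) (z \<omega> k) - x \<omega> (Suc k)))"
  defines "\<Omega> \<equiv> PiM UNIV (\<lambda>_::nat. Xi)"
  defines "Fstar \<equiv> (INF y. ereal (f y) + h y - ereal (g y))"
  defines "Lstar \<equiv> Fstar - ereal (G\<^sup>2 * \<mu>bar / 2)"
      and "Lw0 \<equiv> potential f c h g \<rho> \<mu> x0 x0"
  defines "A \<equiv> 1/16 + 1/\<beta>\<^sup>2 + (\<mu>/\<beta>)\<^sup>2 / 3"
      and "B \<equiv> 1/16 + 1/\<beta>\<^sup>2"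
  defines "Eu \<equiv> (\<integral>\<^sup>+ (\<omega>, r). ennreal ((norm (u \<omega> r))\<^sup>2) \<partial>(\<Omega> \<Otimes>\<^sub>M uniform_count_measure {..<K}))"
      and "Edist \<equiv> (\<integral>\<^sup>+ (\<omega>, r). ennreal ((norm (x \<omega> (Suc r) - prox \<mu> (\<lambda>y. ereal (g y)) (z \<omega> r)))\<^sup>2)
                   \<partial>(\<Omega> \<Otimes>\<^sub>M uniform_count_measure {..<K}))"
      and "Ec \<equiv> (\<integral>\<^sup>+ (\<omega>, r). ennreal ((norm (grad_pen c c' (x \<omega> (Suc r))))\<^sup>2)
                   \<partial>(\<Omega> \<Otimes>\<^sub>M uniform_count_measure {..<K}))"
      and "Ee0 \<equiv> (\<integral>\<^sup>+ \<omega>. ennreal ((norm (e \<omega> 0))\<^sup>2) \<partial>\<Omega>)"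
  assumes prob: "prob_space Xi"
    and f_deriv: "\<forall>y. (f has_derivative (\<lambda>v. gradf y \<bullet> v)) (at y)"
    and c_deriv: "\<forall>y. (c has_derivative c' y) (at y)"
    and h_pcc: "proper_closed_convex h"
    and g_pcc: "proper_closed_convex (\<lambda>y. ereal (g y))"
    \<comment> \<open>(A1)\<close>
    and f_smooth: "\<forall>y y'. norm (gradf y - gradf y') \<le> Lf * norm (y - y')"
    and c_lip: "\<forall>y y'. onorm (\<lambda>v. adjoint (c' y) v - adjoint (c' y') v) \<le> Lc * norm (y - y')"
    and C_pos: "C > 0" and G_pos: "G > 0"
    and gradf_bd: "\<forall>y. norm (gradf y) \<le> G"
    and h_sub_bd: "\<forall>y v. is_subgradient h y v \<longrightarrow> norm v \<le> G"
    and g_sub_bd: "\<forall>y v. is_subgradient (\<lambda>y. ereal (g y)) y v \<longrightarrow> norm v \<le> G"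
    and Dc_bd: "\<forall>y. onorm (adjoint (c' y)) \<le> G"
    and c_bd: "\<forall>y. norm (c y) \<le> C"
    \<comment> \<open>f is the expectation of the stochastic function\<close>
    and f_exp: "\<forall>y. integrable Xi (ff y) \<and> f y = (\<integral>\<xi>. ff y \<xi> \<partial>Xi)"
    and gf_meas: "(\<lambda>(y, \<xi>). gf y \<xi>) \<in> borel_measurable (borel \<Otimes>\<^sub>M Xi)"
    \<comment> \<open>(A2)\<close>
    and A2_unbiased: "\<forall>y. integrable Xi (gf y) \<and> (\<integral>\<xi>. gf y \<xi> \<partial>Xi) = gradf y"
    and A2_var: "\<forall>y. (\<integral>\<^sup>+ \<xi>. ennreal ((norm (gf y \<xi> - gradf y))\<^sup>2) \<partial>Xi) \<le> ennreal (\<sigma>\<^sup>2)"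
    \<comment> \<open>(A4)\<close>
    and A4_diff: "AE \<xi> in Xi. \<forall>y. ((\<lambda>y'. ff y' \<xi>) has_derivative (\<lambda>v. gf y \<xi> \<bullet> v)) (at y)"
    and A4_lip: "\<forall>y y'. (\<integral>\<^sup>+ \<xi>. ennreal ((norm (gf y \<xi> - gf y' \<xi>))\<^sup>2) \<partial>Xi)
                        \<le> ennreal (Lf\<^sup>2 * (norm (y - y'))\<^sup>2)"
    and Fstar_fin: "Fstar > -\<infinity>"
    \<comment> \<open>parameters\<close>
    and rho0_pos: "\<rho>0 > 0" and rho0_le: "\<rho>0 \<le> \<rho>"
    and mu_pos: "\<mu> > 0" and mubar: "\<mu> \<le> \<mu>bar"
    and step: "\<mu> * (\<rho> * (Lf / \<rho>0 + G\<^sup>2 + C * Lc)) \<le> 1/4"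
    and alpha_lb: "0 < 32 * \<mu>\<^sup>2 * Lf\<^sup>2" "32 * \<mu>\<^sup>2 * Lf\<^sup>2 \<le> \<alpha>" and alpha_ub: "\<alpha> \<le> 1"
    and beta: "0 < \<beta>" "\<beta> \<le> 1"
    and K_pos: "K \<ge> 1" and b0_pos: "b0 \<ge> 1"
  shows "(enn2ereal (max Eu Edist) \<le>
           ereal ((1 / real K) * ((96 + 768 * A) * \<mu> * Lf\<^sup>2 / \<alpha> + 24 * A / \<mu>)) * (Lw0 - Lstar)
         + ereal ((48 * A + 6) / (\<alpha> * real K)) * enn2ereal Ee0
         + ereal ((96 * A + 12) * \<alpha> * \<sigma>\<^sup>2))
       \<and> (enn2ereal Ec \<le>
           ereal (2 / (\<rho>\<^sup>2 * real K) * ((144 + 768 / \<beta>\<^sup>2) * \<mu> * Lf\<^sup>2 / \<alpha> + 24 * B / \<mu>)) * (Lw0 - Lstar)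
         + ereal ((12 + 96 * B) / (\<alpha> * \<rho>\<^sup>2 * real K)) * enn2ereal Ee0
         + ereal ((24 + 192 * B) * \<alpha> * \<sigma>\<^sup>2 / \<rho>\<^sup>2)
         + ereal (18 * G\<^sup>2 / \<rho>\<^sup>2))"
proof -
  have alg_inst: "alg f gradf gf Xi c c' h g Lf Lc C G \<sigma> \<rho> \<rho>0 \<mu> \<alpha> \<beta>"
    by (intro alg.intro csetting.intro alg_axioms.intro) (fact assms)+
  interpret A: alg f gradf gf Xi c c' h g Lf Lc C G \<sigma> \<rho> \<rho>0 \<mu> \<alpha> \<beta> b0 x0 by (rule alg_inst)
  have xX: "x = A.X" by (simp add: x_def A.X_def A.st_def fun_eq_iff)
  have zZ: "z = A.Z" by (simp add: z_def A.Z_def A.st_def fun_eq_iff)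
  have dD: "d = A.Dd" by (simp add: d_def A.Dd_def A.st_def fun_eq_iff)
  have gQ: "gradQ = A.gQ" by (simp add: gradQ_def A.gQ_def fun_eq_iff)
  have DD: "D = A.DD" by (simp add: D_def A.DD_def xX dD fun_eq_iff)
  have eE: "e = A.E" by (simp add: e_def A.E_def DD xX gQ fun_eq_iff)
  have Kp: "real K > 0" using K_pos by simp
  have A_pos: "A > 0" unfolding A_def by (simp add: add_pos_nonneg)
  have B_pos: "B > 0" unfolding B_def by (simp add: add_pos_nonneg)
  have al: "\<alpha> > 0" using alpha_lb by linarith
  have rho: "\<rho> > 0" using rho0_pos rho0_le by linarith
  have c1pos: "(1 / real K) * ((96 + 768 * A) * \<mu> * Lf\<^sup>2 / \<alpha> + 24 * A / \<mu>) > 0"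
    using Kp A_pos mu_pos al by (intro mult_pos_pos add_nonneg_pos divide_nonneg_pos mult_nonneg_nonneg) auto
  have c2pos: "(48 * A + 6) / (\<alpha> * real K) > 0" using A_pos al Kp by simp
  have d1pos: "2 / (\<rho>\<^sup>2 * real K) * ((144 + 768 / \<beta>\<^sup>2) * \<mu> * Lf\<^sup>2 / \<alpha> + 24 * B / \<mu>) > 0"
    using Kp B_pos mu_pos al rho by (intro mult_pos_pos add_nonneg_pos divide_nonneg_pos mult_nonneg_nonneg) auto
  have d2pos: "(12 + 96 * B) / (\<alpha> * \<rho>\<^sup>2 * real K) > 0" using B_pos al Kp rho by simp
  have Ee0_nn: "enn2ereal Ee0 \<ge> 0" by simp
  have einf: "\<And>c. c > 0 \<Longrightarrow> ereal c * \<infinity> = \<infinity>" by simp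
  note P = pcc_props[OF h_pcc]
  have Fstar_ne: "Fstar \<noteq> \<infinity>"
  proof -
    obtain y where y: "h y \<noteq> \<infinity>" using P(2) by blast
    then obtain a where a: "h y = ereal a" using P(1)[of y] by (cases "h y") auto
    have "Fstar \<le> ereal (f y) + h y - ereal (g y)" unfolding Fstar_def by (rule INF_lower) simp
    thus ?thesis using a by auto
  qed
  then obtain fs where fs: "Fstar = ereal fs" using Fstar_fin by (cases Fstar) auto
  have Lstar: "Lstar = ereal (fs - G\<^sup>2 * \<mu>bar / 2)" unfolding Lstar_def fs by simp
  show ?thesis
  proof (cases "h x0 = \<infinity>")
    case True
    have "Lw0 = \<infinity>" unfolding Lw0_def potential_def using True by simp
    hence LL: "Lw0 - Lstar = \<infinity>" unfolding Lstar by simp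
    have r1: "ereal ((1 / real K) * ((96 + 768 * A) * \<mu> * Lf\<^sup>2 / \<alpha> + 24 * A / \<mu>)) * (Lw0 - Lstar) = \<infinity>"
      unfolding LL using einf[OF c1pos] .
    have r2: "ereal (2 / (\<rho>\<^sup>2 * real K) * ((144 + 768 / \<beta>\<^sup>2) * \<mu> * Lf\<^sup>2 / \<alpha> + 24 * B / \<mu>)) * (Lw0 - Lstar) = \<infinity>"
      unfolding LL using einf[OF d1pos] .
    have q1: "ereal ((48 * A + 6) / (\<alpha> * real K)) * enn2ereal Ee0 \<ge> 0"
      using c2pos Ee0_nn by (simp add: ereal_zero_le_0_iff)
    have q2: "ereal ((12 + 96 * B) / (\<alpha> * \<rho>\<^sup>2 * real K)) * enn2ereal Ee0 \<ge> 0"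
      using d2pos Ee0_nn by (simp add: ereal_zero_le_0_iff)
    show ?thesis unfolding r1 r2 using q1 q2 by auto
  next
    case False
    interpret B2: alg2 f gradf gf Xi c c' h g Lf Lc C G \<sigma> \<rho> \<rho>0 \<mu> \<alpha> \<beta> b0 x0 \<mu>bar
      by (intro alg2.intro alg_inst alg2_axioms.intro) (use Fstar_fin[unfolded Fstar_def] False mubar in auto)
    have Fst: "B2.Fst = Fstar" unfolding B2.Fst_def Fstar_def ..
    have Ls: "Lstar = ereal B2.Ls" unfolding Lstar B2.Ls_def B2.Fs_def Fst fs by simp
    obtain a0 where a0: "h x0 = ereal a0" using False P(1)[of x0] by (cases "h x0") auto
    have Lw0: "Lw0 = ereal (A.Pot x0 x0)" unfolding Lw0_def potential_def A.Pot_def using a0 by simp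
    define v0 where "v0 = A.Pot x0 x0 - B2.Ls"
    have LL: "Lw0 - Lstar = ereal v0" unfolding Lw0 Ls v0_def by simp
    have v0nn: "v0 \<ge> 0" unfolding v0_def using B2.Pot_lb[of x0 x0] B2.Ls_le a0 by simp
    have uU: "(norm (u \<omega> r))\<^sup>2 = B2.U \<omega> r" for \<omega> r
      unfolding u_def B2.U_def gQ DD xX zZ A.pg_def ..
    have pP: "(norm (x \<omega> (Suc r) - prox \<mu> (\<lambda>y. ereal (g y)) (z \<omega> r)))\<^sup>2 = B2.Pd \<omega> r" for \<omega> r
      unfolding B2.Pd_def xX zZ A.pg_def ..
    have cP: "(norm (grad_pen c c' (x \<omega> (Suc r))))\<^sup>2 = B2.Pen \<omega> r" for \<omega> r
      unfolding B2.Pen_def xX ..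
    have Ee0: "Ee0 = (\<integral>\<^sup>+\<omega>. ennreal (B2.Ek \<omega> 0) \<partial>PiM UNIV (\<lambda>_. Xi))"
      unfolding Ee0_def \<Omega>_def B2.Ek_def eE ..
    show ?thesis
    proof (cases "Ee0 = \<infinity>")
      case True
      have r1: "ereal ((48 * A + 6) / (\<alpha> * real K)) * enn2ereal Ee0 = \<infinity>"
        using True einf[OF c2pos] by simp
      have r2: "ereal ((12 + 96 * B) / (\<alpha> * \<rho>\<^sup>2 * real K)) * enn2ereal Ee0 = \<infinity>"
        using True einf[OF d2pos] by simp
      show ?thesis unfolding r1 r2 LL by simp
    next
      case False
      have e0: "(\<integral>\<^sup>+\<omega>. ennreal (B2.Ek \<omega> 0) \<partial>PiM UNIV (\<lambda>_. Xi)) < \<infinity>"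
        using False unfolding Ee0 by (simp add: less_top)
      define ee where "ee = (\<integral>\<omega>. B2.Ek \<omega> 0 \<partial>PiM UNIV (\<lambda>_. Xi))"
      have Ee0r: "Ee0 = ennreal ee" unfolding Ee0 ee_def
        by (intro nn_integral_eq_integral B2.integ_all[OF e0] AE_I2) (simp add: B2.Ek_nonneg)
      note MB = B2.main_bounds[OF e0 K_pos, folded v0_def ee_def]
      define W where "W = 6 * v0 / (\<mu> * \<beta>) + (12 / \<beta> + 3) * ee / \<alpha> + (24 / \<beta> + 6) * real K * \<alpha> * \<sigma>\<^sup>2"
      define SP where "SP = 2 * \<mu> * v0 / \<beta> + 4 * \<mu>\<^sup>2 * ee / (\<alpha> * \<beta>) + 8 * real K * \<mu>\<^sup>2 * \<alpha> * \<sigma>\<^sup>2 / \<beta>"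
      have een: "ee \<ge> 0" using MB(5) .
      have Wnn: "W \<ge> 0" unfolding W_def using v0nn een mu_pos beta al by (intro add_nonneg_nonneg) auto
      note FC1 = final_cmp(1)[where vz=v0 and ez=ee and \<mu>=\<mu> and \<beta>=\<beta> and \<alpha>=\<alpha> and \<sigma>=\<sigma> and Lf=Lf and \<rho>=\<rho> and K=K,
          OF mu_pos beta al K_pos rho v0nn een, folded A_def W_def]
      note FC2 = final_cmp(2)[where vz=v0 and ez=ee and \<mu>=\<mu> and \<beta>=\<beta> and \<alpha>=\<alpha> and \<sigma>=\<sigma> and Lf=Lf and \<rho>=\<rho> and K=K,
          OF mu_pos beta al K_pos rho v0nn een, folded A_def SP_def]
      note FC3 = final_cmp(3)[where vz=v0 and ez=ee and \<mu>=\<mu> and \<beta>=\<beta> and \<alpha>=\<alpha> and \<sigma>=\<sigma> and Lf=Lf and \<rho>=\<rho> and K=K and G=G,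
          OF mu_pos beta al K_pos rho v0nn een, folded B_def W_def]
      have Eu: "Eu = ennreal (1 / real K) * (\<Sum>r<K. \<integral>\<^sup>+\<omega>. ennreal (B2.U \<omega> r) \<partial>PiM UNIV (\<lambda>_. Xi))"
        unfolding Eu_def \<Omega>_def uU split_beta
        by (rule pair_uniform_sum[of "\<lambda>r \<omega>. ennreal (B2.U \<omega> r)"]) (use K_pos in auto)
      have Edist: "Edist = ennreal (1 / real K) * (\<Sum>r<K. \<integral>\<^sup>+\<omega>. ennreal (B2.Pd \<omega> r) \<partial>PiM UNIV (\<lambda>_. Xi))"
        unfolding Edist_def \<Omega>_def pP split_beta
        by (rule pair_uniform_sum[of "\<lambda>r \<omega>. ennreal (B2.Pd \<omega> r)"]) (use K_pos in auto)
      have Ec: "Ec = ennreal (1 / real K) * (\<Sum>r<K. \<integral>\<^sup>+\<omega>. ennreal (B2.Pen \<omega> r) \<partial>PiM UNIV (\<lambda>_. Xi))"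
        unfolding Ec_def \<Omega>_def cP split_beta
        by (rule pair_uniform_sum[of "\<lambda>r \<omega>. ennreal (B2.Pen \<omega> r)"]) (use K_pos in auto)
      have mulK: "ennreal (1 / real K) * ennreal t = ennreal (t / real K)" if "t \<ge> 0" for t
        using that Kp by (simp add: ennreal_mult[symmetric])
      have Eu_le: "Eu \<le> ennreal (W / real K)"
      proof -
        have "Eu \<le> ennreal (1 / real K) * ennreal W" unfolding Eu using MB(1)[folded W_def] by (rule mult_left_mono) simp
        thus ?thesis using mulK[OF Wnn] by simp
      qed
      have SPnn: "SP \<ge> 0" unfolding SP_def using v0nn een mu_pos beta al by (intro add_nonneg_nonneg) auto
      have Ed_le: "Edist \<le> ennreal (SP / real K)"
      proof -
        have "Edist \<le> ennreal (1 / real K) * ennreal SP" unfolding Edist using MB(2)[folded SP_def] by (rule mult_left_mono) simp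
        thus ?thesis using mulK[OF SPnn] by simp
      qed
      have PPnn: "(2 * W + 18 * real K * G\<^sup>2) / \<rho>\<^sup>2 \<ge> 0" using Wnn by simp
      have Ec_le: "Ec \<le> ennreal ((2 * (W / real K) + 18 * G\<^sup>2) / \<rho>\<^sup>2)"
      proof -
        have "Ec \<le> ennreal (1 / real K) * ennreal ((2 * W + 18 * real K * G\<^sup>2) / \<rho>\<^sup>2)"
          unfolding Ec using MB(3)[folded W_def] by (rule mult_left_mono) simp
        also have "\<dots> = ennreal ((2 * W + 18 * real K * G\<^sup>2) / \<rho>\<^sup>2 / real K)" using mulK[OF PPnn] .
        also have "(2 * W + 18 * real K * G\<^sup>2) / \<rho>\<^sup>2 / real K = (2 * (W / real K) + 18 * G\<^sup>2) / \<rho>\<^sup>2"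
          using Kp by (simp add: field_simps)
        finally show ?thesis .
      qed
      define R1 where "R1 = (1 / real K) * ((96 + 768 * A) * \<mu> * Lf\<^sup>2 / \<alpha> + 24 * A / \<mu>) * v0
         + (48 * A + 6) / (\<alpha> * real K) * ee + (96 * A + 12) * \<alpha> * \<sigma>\<^sup>2"
      define R2 where "R2 = 2 / (\<rho>\<^sup>2 * real K) * ((144 + 768 / \<beta>\<^sup>2) * \<mu> * Lf\<^sup>2 / \<alpha> + 24 * B / \<mu>) * v0
         + (12 + 96 * B) / (\<alpha> * \<rho>\<^sup>2 * real K) * ee + (24 + 192 * B) * \<alpha> * \<sigma>\<^sup>2 / \<rho>\<^sup>2 + 18 * G\<^sup>2 / \<rho>\<^sup>2"
      have F1: "W / real K \<le> R1" and F2: "SP / real K \<le> R1" and F3: "(2 * (W / real K) + 18 * G\<^sup>2) / \<rho>\<^sup>2 \<le> R2"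
        using FC1 FC2 FC3 unfolding R1_def R2_def by auto
      have R1nn: "R1 \<ge> 0" using F1 Wnn Kp by (smt (verit) divide_nonneg_pos)
      have "(2 * (W / real K) + 18 * G\<^sup>2) / \<rho>\<^sup>2 \<ge> 0" using Wnn Kp by simp
      hence R2nn: "R2 \<ge> 0" using F3 by linarith
      have RHS1: "ereal (1 / real K * ((96 + 768 * A) * \<mu> * Lf\<^sup>2 / \<alpha> + 24 * A / \<mu>)) * (Lw0 - Lstar)
          + ereal ((48 * A + 6) / (\<alpha> * real K)) * enn2ereal Ee0 + ereal ((96 * A + 12) * \<alpha> * \<sigma>\<^sup>2) = ereal R1"
        unfolding LL Ee0r R1_def using een by simp
      have RHS2: "ereal (2 / (\<rho>\<^sup>2 * real K) * ((144 + 768 / \<beta>\<^sup>2) * \<mu> * Lf\<^sup>2 / \<alpha> + 24 * B / \<mu>)) * (Lw0 - Lstar)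
          + ereal ((12 + 96 * B) / (\<alpha> * \<rho>\<^sup>2 * real K)) * enn2ereal Ee0 + ereal ((24 + 192 * B) * \<alpha> * \<sigma>\<^sup>2 / \<rho>\<^sup>2)
          + ereal (18 * G\<^sup>2 / \<rho>\<^sup>2) = ereal R2"
        unfolding LL Ee0r R2_def using een by simp
      have M1: "max Eu Edist \<le> ennreal R1"
        using order_trans[OF Eu_le ennreal_leI[OF F1]] order_trans[OF Ed_le ennreal_leI[OF F2]] by simp
      have M2: "Ec \<le> ennreal R2" using order_trans[OF Ec_le ennreal_leI[OF F3]] .
      have "enn2ereal (max Eu Edist) \<le> ereal R1"
        using M1 R1nn by (metis enn2ereal_ennreal less_eq_ennreal.rep_eq)
      moreover have "enn2ereal Ec \<le> ereal R2"
        using M2 R2nn by (metis enn2ereal_ennreal less_eq_ennreal.rep_eq)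
      ultimately show ?thesis unfolding RHS1 RHS2 by simp
    qed
  qed
qed

end
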